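(* Let $\mathcal V$ be a variety, $A\in\mathcal V$ and $\alpha,\beta\in\operatorname{Con}A$. \begin{enumerate} \item If $\mathcal V$ has a difference term, then for all $a,b,d\in A$ with $(a,b),(a,d)\in\alpha$: if $\big((a,b),(a,d)\big)\in\Delta_{\alpha\beta}$ then $(b,d)\in[\alpha,\beta]$. \item If $\mathcal V$ has a weak-difference term and $\alpha$ is abelian, then for all $b,d\in A$: there exists $a\in A$ with $(a,b),(a,d)\in\alpha$ and $\big((a,b),(a,d)\big)\in\Delta_{\alpha\beta}$ if and only if $(b,d)\in[\beta,\alpha]$. \item If $\mathcal V$ has a weak-difference term and $\alpha$ is abelian, then $\Delta_{\alpha\alpha}=\Delta_{\alpha\gamma}\wedge\hat\alpha$ for every $\gamma\in\operatorname{Con}A$ with $\alpha\le\gamma\le(0:\alpha)$. \item If $\mathcal V$ has a difference term $m$ and $\alpha$ is abelian, then for all $(a,b),(c,d)\in\alpha$ the following are equivalent: (a) $\big((a,b),(c,d)\big)\in\Delta_{\alpha\beta}$; (b) $\big((a,b),(c,m(b,a,c))\big)\in\Delta_{\alpha\beta}$ and $(d,m(b,a,c))\in[\alpha,\beta]$; (c) $(c,a)\in\beta$, $(a,b)\in\alpha$, and $(d,m(b,a,c))\in[\alpha,\beta]$. \end{enumerate}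
   Context: All algebras are in the sense of universal algebra. For an algebra $A$ and $\alpha,\beta\in\operatorname{Con}A$, $[\alpha,\beta]$ denotes the term-condition (TC) commutator; $0$ denotes the equality relation and $1$ the total relation. A congruence $\alpha$ is abelian if $[\alpha,\alpha]=0$. $A(\alpha)=\{(x,y)\in A\times A:(x,y)\in\alpha\}$ is the congruence $\alpha$ viewed as a subalgebra of $A\times A$. $\Delta_{\alpha\beta}$ is the congruence of $A(\alpha)$ generated by $\{((u,u),(v,v)):(u,v)\in\beta\}$. $\hat\alpha$ is the equivalence relation on $A(\alpha)$ given by $(x,y)\mathrel{\hat\alpha}(u,v)$ iff $x,y,u,v$ all lie in one $\alpha$-class. $(0:\alpha)$ denotes the centralizer of $\alpha$, the largest congruence $\gamma$ with $[\gamma,\alpha]=0$. A variety $\mathcal V$ has a difference term if there is a ternary term $d$ such that for every $A\in\mathcal V$, $\theta\in\operatorname{Con}A$ and $(a,b)\in\theta$: $d(a,a,b)=b$ and $(d(a,b,b),a)\in[\theta,\theta]$. It has a weak-difference term if there is a ternary term $d$ such that for all such $A,\theta,(a,b)$: $(d(a,a,b),b)\in[\theta,\theta]$ and $(b,d(b,a,a))\in[\theta,\theta]$. *)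

theory Defs
  imports Main
begin

text \<open>An algebra has a carrier and an interpretation of each operation symbol as a
  function on lists (only lists of the right length matter).\<close>

record ('a, 'f) alg =
  car :: "'a set"
  opr :: "'f \<Rightarrow> 'a list \<Rightarrow> 'a"

datatype ('f, 'v) trm = Var 'v | App 'f "('f, 'v) trm list"

fun eval :: "('a, 'f, 'm) alg_scheme \<Rightarrow> ('v \<Rightarrow> 'a) \<Rightarrow> ('f, 'v) trm \<Rightarrow> 'a" where
  "eval A \<rho> (Var x) = \<rho> x"
| "eval A \<rho> (App f ts) = opr A f (map (eval A \<rho>) ts)"

fun wf_trm :: "('f \<Rightarrow> nat) \<Rightarrow> ('f, 'v) trm \<Rightarrow> bool" where
  "wf_trm ar (Var x) = True"
| "wf_trm ar (App f ts) = (length ts = ar f \<and> (\<forall>t\<in>set ts. wf_trm ar t))"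

fun vars_trm :: "('f, 'v) trm \<Rightarrow> 'v set" where
  "vars_trm (Var x) = {x}"
| "vars_trm (App f ts) = \<Union> (vars_trm ` set ts)"

definition algebra :: "('f \<Rightarrow> nat) \<Rightarrow> ('a, 'f) alg \<Rightarrow> bool" where
  "algebra ar A \<longleftrightarrow> car A \<noteq> {} \<and>
     (\<forall>f xs. length xs = ar f \<and> set xs \<subseteq> car A \<longrightarrow> opr A f xs \<in> car A)"

text \<open>Identities are pairs of terms over variables nat. A variety is given (by
  Birkhoff's theorem) as the class of models of a set of identities.\<close>

definition wf_identities :: "('f \<Rightarrow> nat) \<Rightarrow> (('f, nat) trm \<times> ('f, nat) trm) set \<Rightarrow> bool" where
  "wf_identities ar \<Sigma> \<longleftrightarrow> (\<forall>(s, t)\<in>\<Sigma>. wf_trm ar s \<and> wf_trm ar t)"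

definition models :: "('f \<Rightarrow> nat) \<Rightarrow> (('f, nat) trm \<times> ('f, nat) trm) set \<Rightarrow> ('a, 'f) alg \<Rightarrow> bool" where
  "models ar \<Sigma> A \<longleftrightarrow> algebra ar A \<and>
     (\<forall>(s, t)\<in>\<Sigma>. \<forall>\<rho>. (\<forall>i. \<rho> i \<in> car A) \<longrightarrow> eval A \<rho> s = eval A \<rho> t)"

definition congruence :: "('f \<Rightarrow> nat) \<Rightarrow> ('a, 'f) alg \<Rightarrow> ('a \<times> 'a) set \<Rightarrow> bool" where
  "congruence ar A \<theta> \<longleftrightarrow> equiv (car A) \<theta> \<and>
     (\<forall>f xs ys. length xs = ar f \<and> list_all2 (\<lambda>x y. (x, y) \<in> \<theta>) xs ys
        \<longrightarrow> (opr A f xs, opr A f ys) \<in> \<theta>)"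

definition Cg :: "('f \<Rightarrow> nat) \<Rightarrow> ('a, 'f) alg \<Rightarrow> ('a \<times> 'a) set \<Rightarrow> ('a \<times> 'a) set" where
  "Cg ar A R = \<Inter> {\<theta>. congruence ar A \<theta> \<and> R \<subseteq> \<theta>}"

text \<open>For every term
  t(x, y) (x-variables Inl i, y-variables Inr j), all tuples a alpha b and
  c beta d: t(a,c) delta t(a,d) implies t(b,c) delta t(b,d).\<close>
definition centralizes ::
  "('f \<Rightarrow> nat) \<Rightarrow> ('a, 'f) alg \<Rightarrow> ('a \<times> 'a) set \<Rightarrow> ('a \<times> 'a) set \<Rightarrow> ('a \<times> 'a) set \<Rightarrow> bool" where
  "centralizes ar A \<alpha> \<beta> \<delta> \<longleftrightarrow>
     (\<forall>t :: ('f, nat + nat) trm. wf_trm ar t \<longrightarrow>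
       (\<forall>a b c d. (\<forall>i. (a i, b i) \<in> \<alpha>) \<and> (\<forall>j. (c j, d j) \<in> \<beta>) \<longrightarrow>
          (eval A (case_sum a c) t, eval A (case_sum a d) t) \<in> \<delta> \<longrightarrow>
          (eval A (case_sum b c) t, eval A (case_sum b d) t) \<in> \<delta>))"

definition comm :: "('f \<Rightarrow> nat) \<Rightarrow> ('a, 'f) alg \<Rightarrow> ('a \<times> 'a) set \<Rightarrow> ('a \<times> 'a) set \<Rightarrow> ('a \<times> 'a) set" where
  "comm ar A \<alpha> \<beta> = \<Inter> {\<delta>. congruence ar A \<delta> \<and> centralizes ar A \<alpha> \<beta> \<delta>}"

definition abelian :: "('f \<Rightarrow> nat) \<Rightarrow> ('a, 'f) alg \<Rightarrow> ('a \<times> 'a) set \<Rightarrow> bool" where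
  "abelian ar A \<alpha> \<longleftrightarrow> comm ar A \<alpha> \<alpha> = Id_on (car A)"

definition centralizer :: "('f \<Rightarrow> nat) \<Rightarrow> ('a, 'f) alg \<Rightarrow> ('a \<times> 'a) set \<Rightarrow> ('a \<times> 'a) set" where
  "centralizer ar A \<alpha> =
     (GREATEST \<gamma>. congruence ar A \<gamma> \<and> comm ar A \<gamma> \<alpha> = Id_on (car A))"

definition cong_alg :: "('a, 'f) alg \<Rightarrow> ('a \<times> 'a) set \<Rightarrow> ('a \<times> 'a, 'f) alg" where
  "cong_alg A \<alpha> = \<lparr> car = \<alpha>,
      opr = (\<lambda>f ps. (opr A f (map fst ps), opr A f (map snd ps))) \<rparr>"

definition Delta ::
  "('f \<Rightarrow> nat) \<Rightarrow> ('a, 'f) alg \<Rightarrow> ('a \<times> 'a) set \<Rightarrow> ('a \<times> 'a) set \<Rightarrow> (('a \<times> 'a) \<times> ('a \<times> 'a)) set" where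
  "Delta ar A \<alpha> \<beta> = Cg ar (cong_alg A \<alpha>) {((u, u), (v, v)) | u v. (u, v) \<in> \<beta>}"

definition alpha_hat :: "('a \<times> 'a) set \<Rightarrow> (('a \<times> 'a) \<times> ('a \<times> 'a)) set" where
  "alpha_hat \<alpha> = {((x, y), (u, v)). (x, y) \<in> \<alpha> \<and> (u, v) \<in> \<alpha> \<and>
       (\<forall>p\<in>{x, y, u, v}. \<forall>q\<in>{x, y, u, v}. (p, q) \<in> \<alpha>)}"

definition apply3 :: "('a, 'f) alg \<Rightarrow> ('f, nat) trm \<Rightarrow> 'a \<Rightarrow> 'a \<Rightarrow> 'a \<Rightarrow> 'a" where
  "apply3 A d x y z = eval A (\<lambda>i. if i = 0 then x else if i = 1 then y else z) d"

definition diff_term_at ::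
  "'u itself \<Rightarrow> ('f \<Rightarrow> nat) \<Rightarrow> (('f, nat) trm \<times> ('f, nat) trm) set \<Rightarrow> ('f, nat) trm \<Rightarrow> bool" where
  "diff_term_at _ ar \<Sigma> d \<longleftrightarrow>
     (\<forall>B :: ('u, 'f) alg. models ar \<Sigma> B \<longrightarrow>
       (\<forall>\<theta>. congruence ar B \<theta> \<longrightarrow>
         (\<forall>a b. (a, b) \<in> \<theta> \<longrightarrow>
            apply3 B d a a b = b \<and> (apply3 B d a b b, a) \<in> comm ar B \<theta> \<theta>)))"

definition weak_diff_term_at ::
  "'u itself \<Rightarrow> ('f \<Rightarrow> nat) \<Rightarrow> (('f, nat) trm \<times> ('f, nat) trm) set \<Rightarrow> ('f, nat) trm \<Rightarrow> bool" where
  "weak_diff_term_at _ ar \<Sigma> d \<longleftrightarrow>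
     (\<forall>B :: ('u, 'f) alg. models ar \<Sigma> B \<longrightarrow>
       (\<forall>\<theta>. congruence ar B \<theta> \<longrightarrow>
         (\<forall>a b. (a, b) \<in> \<theta> \<longrightarrow>
            (apply3 B d a a b, b) \<in> comm ar B \<theta> \<theta> \<and>
            (b, apply3 B d b a a) \<in> comm ar B \<theta> \<theta>)))"

text \<open>"d is a (weak) difference term of the variety Mod(Sigma)", where the
  quantification over all algebras of the variety is restricted (HOL typing) to
  algebras whose carriers live in types built from 'a.\<close>
definition is_diff_term ::
  "'a itself \<Rightarrow> ('f \<Rightarrow> nat) \<Rightarrow> (('f, nat) trm \<times> ('f, nat) trm) set \<Rightarrow> ('f, nat) trm \<Rightarrow> bool" where
  "is_diff_term _ ar \<Sigma> d \<longleftrightarrow> wf_trm ar d \<and> vars_trm d \<subseteq> {0, 1, 2} \<and>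
     diff_term_at TYPE('a) ar \<Sigma> d \<and>
     diff_term_at TYPE('a \<times> 'a) ar \<Sigma> d \<and>
     diff_term_at TYPE(('a \<times> 'a) \<times> ('a \<times> 'a)) ar \<Sigma> d \<and>
     diff_term_at TYPE('a set) ar \<Sigma> d \<and>
     diff_term_at TYPE(('a \<times> 'a) set) ar \<Sigma> d \<and>
     diff_term_at TYPE('a set set set) ar \<Sigma> d"

definition is_weak_diff_term ::
  "'a itself \<Rightarrow> ('f \<Rightarrow> nat) \<Rightarrow> (('f, nat) trm \<times> ('f, nat) trm) set \<Rightarrow> ('f, nat) trm \<Rightarrow> bool" where
  "is_weak_diff_term _ ar \<Sigma> d \<longleftrightarrow> wf_trm ar d \<and> vars_trm d \<subseteq> {0, 1, 2} \<and>
     weak_diff_term_at TYPE('a) ar \<Sigma> d \<and>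
     weak_diff_term_at TYPE('a \<times> 'a) ar \<Sigma> d \<and>
     weak_diff_term_at TYPE(('a \<times> 'a) \<times> ('a \<times> 'a)) ar \<Sigma> d \<and>
     weak_diff_term_at TYPE('a set) ar \<Sigma> d \<and>
     weak_diff_term_at TYPE(('a \<times> 'a) set) ar \<Sigma> d \<and>
     weak_diff_term_at TYPE('a set set set) ar \<Sigma> d"

definition has_diff_term :: "'a itself \<Rightarrow> ('f \<Rightarrow> nat) \<Rightarrow> (('f, nat) trm \<times> ('f, nat) trm) set \<Rightarrow> bool" where
  "has_diff_term T ar \<Sigma> \<longleftrightarrow> (\<exists>d. is_diff_term T ar \<Sigma> d)"

definition has_weak_diff_term :: "'a itself \<Rightarrow> ('f \<Rightarrow> nat) \<Rightarrow> (('f, nat) trm \<times> ('f, nat) trm) set \<Rightarrow> bool" where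
  "has_weak_diff_term T ar \<Sigma> \<longleftrightarrow> (\<exists>d. is_weak_diff_term T ar \<Sigma> d)"

end

theory Submission
  imports Defs
begin

fun subst :: "('v \<Rightarrow> ('f,'w) trm) \<Rightarrow> ('f,'v) trm \<Rightarrow> ('f,'w) trm" where
  "subst \<sigma> (Var x) = \<sigma> x"
| "subst \<sigma> (App f ts) = App f (map (subst \<sigma>) ts)"

lemma eval_subst: "eval A \<rho> (subst \<sigma> t) = eval A (\<lambda>v. eval A \<rho> (\<sigma> v)) t"
  by (induction t) (simp_all cong: map_cong)

lemma wf_subst: "wf_trm ar t \<Longrightarrow> (\<And>v. v \<in> vars_trm t \<Longrightarrow> wf_trm ar (\<sigma> v)) \<Longrightarrow> wf_trm ar (subst \<sigma> t)"
  by (induction t) auto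

lemma finite_vars: "finite (vars_trm t)"
  by (induction t) auto

lemma eval_vars: "(\<And>v. v \<in> vars_trm t \<Longrightarrow> \<rho> v = \<rho>' v) \<Longrightarrow> eval A \<rho> t = eval A \<rho>' t"
proof (induction t)
  case (Var x) then show ?case by simp
next
  case (App f ts)
  have "map (eval A \<rho>) ts = map (eval A \<rho>') ts"
    by (rule map_cong) (use App in force)+
  then show ?case by (metis eval.simps(2))
qed

lemma eval_car: "algebra ar A \<Longrightarrow> wf_trm ar t \<Longrightarrow> (\<And>v. v \<in> vars_trm t \<Longrightarrow> \<rho> v \<in> car A) \<Longrightarrow> eval A \<rho> t \<in> car A"
proof (induction t)
  case (Var x) then show ?case by simp
next
  case (App f ts)
  have "set (map (eval A \<rho>) ts) \<subseteq> car A" using App by auto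
  then show ?case using App(2,3) unfolding algebra_def by auto
qed

lemma cong_eval: "congruence ar A \<theta> \<Longrightarrow> wf_trm ar t \<Longrightarrow> (\<And>v. v \<in> vars_trm t \<Longrightarrow> (\<rho> v, \<rho>' v) \<in> \<theta>)
   \<Longrightarrow> (eval A \<rho> t, eval A \<rho>' t) \<in> \<theta>"
proof (induction t)
  case (Var x) then show ?case by simp
next
  case (App f ts)
  have "list_all2 (\<lambda>x y. (x, y) \<in> \<theta>) (map (eval A \<rho>) ts) (map (eval A \<rho>') ts)"
    using App by (auto simp: list_all2_map1 list_all2_map2 intro!: list.rel_refl_strong)
  then show ?case using App(2,3) unfolding congruence_def by auto
qed

lemma eval_cong_alg: "eval (cong_alg A \<alpha>) \<rho> t = (eval A (fst \<circ> \<rho>) t, eval A (snd \<circ> \<rho>) t)"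
  by (induction t) (simp_all add: cong_alg_def comp_def cong: map_cong)

lemma cong_sub: "congruence ar A \<theta> \<Longrightarrow> \<theta> \<subseteq> car A \<times> car A"
  unfolding congruence_def equiv_def refl_on_def by blast
lemma cong_refl: "congruence ar A \<theta> \<Longrightarrow> x \<in> car A \<Longrightarrow> (x, x) \<in> \<theta>"
  unfolding congruence_def equiv_def refl_on_def by blast
lemma cong_sym: "congruence ar A \<theta> \<Longrightarrow> (x, y) \<in> \<theta> \<Longrightarrow> (y, x) \<in> \<theta>"
  unfolding congruence_def equiv_def sym_def by blast
lemma cong_trans: "congruence ar A \<theta> \<Longrightarrow> (x, y) \<in> \<theta> \<Longrightarrow> (y, z) \<in> \<theta> \<Longrightarrow> (x, z) \<in> \<theta>"
  unfolding congruence_def equiv_def trans_def by blast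
lemma cong_carD: "congruence ar A \<theta> \<Longrightarrow> (x, y) \<in> \<theta> \<Longrightarrow> x \<in> car A \<and> y \<in> car A"
  using cong_sub by blast

lemma congruenceI:
  assumes "\<theta> \<subseteq> car A \<times> car A" "\<And>x. x \<in> car A \<Longrightarrow> (x, x) \<in> \<theta>"
    "\<And>x y. (x, y) \<in> \<theta> \<Longrightarrow> (y, x) \<in> \<theta>"
    "\<And>x y z. (x, y) \<in> \<theta> \<Longrightarrow> (y, z) \<in> \<theta> \<Longrightarrow> (x, z) \<in> \<theta>"
    "\<And>f xs ys. length xs = ar f \<Longrightarrow> list_all2 (\<lambda>x y. (x, y) \<in> \<theta>) xs ys \<Longrightarrow> (opr A f xs, opr A f ys) \<in> \<theta>"
  shows "congruence ar A \<theta>"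
  unfolding congruence_def equiv_def refl_on_def sym_def trans_def using assms by blast

lemma list_all2_setD: "list_all2 (\<lambda>x y. (x, y) \<in> S \<times> T) xs ys \<Longrightarrow> set xs \<subseteq> S \<and> set ys \<subseteq> T \<and> length ys = length xs"
  by (induction xs ys rule: list_all2_induct) auto

lemma total_cong: "algebra ar A \<Longrightarrow> congruence ar A (car A \<times> car A)"
proof (rule congruenceI)
  fix f xs ys assume a: "algebra ar A" "length xs = ar f" "list_all2 (\<lambda>x y. (x, y) \<in> car A \<times> car A) xs ys"
  then have "set xs \<subseteq> car A" "set ys \<subseteq> car A" "length ys = ar f" using list_all2_setD by metis+
  then show "(opr A f xs, opr A f ys) \<in> car A \<times> car A" using a(1,2) unfolding algebra_def by blast
qed auto

lemma list_all2_Id_on: "list_all2 (\<lambda>x y. (x, y) \<in> Id_on S) xs ys \<Longrightarrow> xs = ys \<and> set xs \<subseteq> S"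
  by (induction xs ys rule: list_all2_induct) auto

lemma Id_cong: "algebra ar A \<Longrightarrow> congruence ar A (Id_on (car A))"
proof (rule congruenceI)
  fix f xs ys assume a: "algebra ar A" "length xs = ar f" "list_all2 (\<lambda>x y. (x, y) \<in> Id_on (car A)) xs ys"
  then have "xs = ys" "set xs \<subseteq> car A" using list_all2_Id_on by metis+
  then show "(opr A f xs, opr A f ys) \<in> Id_on (car A)" using a(1,2) unfolding algebra_def by blast
qed auto

lemma Inter_cong: "S \<noteq> {} \<Longrightarrow> (\<And>\<theta>. \<theta> \<in> S \<Longrightarrow> congruence ar A \<theta>) \<Longrightarrow> congruence ar A (\<Inter>S)"
proof (rule congruenceI)
  assume ne: "S \<noteq> {}" and c: "\<And>\<theta>. \<theta> \<in> S \<Longrightarrow> congruence ar A \<theta>"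
  obtain \<theta>0 where t0: "\<theta>0 \<in> S" using ne by blast
  have "\<theta>0 \<subseteq> car A \<times> car A" using c[OF t0] by (rule cong_sub)
  then show "\<Inter> S \<subseteq> car A \<times> car A" using t0 by blast
  show "\<And>x. x \<in> car A \<Longrightarrow> (x, x) \<in> \<Inter> S"
    by (rule InterI) (erule cong_refl[OF c])
  show "\<And>x y. (x, y) \<in> \<Inter> S \<Longrightarrow> (y, x) \<in> \<Inter> S"
    by (rule InterI) (rule cong_sym[OF c], assumption, erule InterD, assumption)
  show "\<And>x y z. (x, y) \<in> \<Inter> S \<Longrightarrow> (y, z) \<in> \<Inter> S \<Longrightarrow> (x, z) \<in> \<Inter> S"
    by (rule InterI) (rule cong_trans[OF c], assumption, erule InterD, assumption, erule InterD, assumption)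
  fix f xs ys assume l: "length xs = ar f" and r: "list_all2 (\<lambda>x y. (x, y) \<in> \<Inter> S) xs ys"
  show "(opr A f xs, opr A f ys) \<in> \<Inter> S"
  proof
    fix \<theta> assume th: "\<theta> \<in> S"
    have "list_all2 (\<lambda>x y. (x, y) \<in> \<theta>) xs ys" using r by (rule list_all2_mono) (use th in blast)
    then show "(opr A f xs, opr A f ys) \<in> \<theta>" using c[OF th] l unfolding congruence_def by blast
  qed
qed

lemma Int_cong: "congruence ar A \<theta>1 \<Longrightarrow> congruence ar A \<theta>2 \<Longrightarrow> congruence ar A (\<theta>1 \<inter> \<theta>2)"
  using Inter_cong[of "{\<theta>1, \<theta>2}" ar A] by auto

lemma centralizes_Inter: "(\<And>\<delta>. \<delta> \<in> S \<Longrightarrow> centralizes ar A \<alpha> \<beta> \<delta>) \<Longrightarrow> centralizes ar A \<alpha> \<beta> (\<Inter>S)"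
  unfolding centralizes_def by (simp add: Inter_iff) meson

lemma centralizes_mono: "centralizes ar A \<alpha> \<beta> \<delta> \<Longrightarrow> \<alpha>' \<subseteq> \<alpha> \<Longrightarrow> \<beta>' \<subseteq> \<beta> \<Longrightarrow> centralizes ar A \<alpha>' \<beta>' \<delta>"
  unfolding centralizes_def
  apply (intro allI impI)
  apply (erule allE, erule impE, assumption)
  apply (erule_tac x=a in allE, erule_tac x=b in allE, erule_tac x=c in allE, erule_tac x=d in allE, erule impE)
   apply blast
  apply (erule impE, assumption, assumption)
  done

lemma centralizes_total:
  assumes "algebra ar A" "\<alpha> \<subseteq> car A \<times> car A" "\<beta> \<subseteq> car A \<times> car A"
  shows "centralizes ar A \<alpha> \<beta> (car A \<times> car A)"
  unfolding centralizes_def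
proof (intro allI impI)
  fix t :: "(_, nat + nat) trm" and a b c d :: "nat \<Rightarrow> _"
  assume wf: "wf_trm ar t" and h: "(\<forall>i. (a i, b i) \<in> \<alpha>) \<and> (\<forall>j. (c j, d j) \<in> \<beta>)"
  have b: "\<forall>i. b i \<in> car A" using h assms(2) by (meson mem_Sigma_iff subsetD)
  have c: "\<forall>j. c j \<in> car A" and d: "\<forall>j. d j \<in> car A"
    using h assms(3) by (meson mem_Sigma_iff subsetD)+
  show "(eval A (case_sum b c) t, eval A (case_sum b d) t) \<in> car A \<times> car A"
    using eval_car[OF assms(1) wf] b c d by (auto split: sum.split)
qed

definition cgs where "cgs ar A \<alpha> \<beta> = {\<delta>. congruence ar A \<delta> \<and> centralizes ar A \<alpha> \<beta> \<delta>}"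

lemma comm_alt: "comm ar A \<alpha> \<beta> = \<Inter> (cgs ar A \<alpha> \<beta>)"
  unfolding comm_def cgs_def by simp

lemma comm_props:
  assumes "algebra ar A" "congruence ar A \<alpha>" "congruence ar A \<beta>"
  shows "congruence ar A (comm ar A \<alpha> \<beta>)" "centralizes ar A \<alpha> \<beta> (comm ar A \<alpha> \<beta>)"
proof -
  have "car A \<times> car A \<in> cgs ar A \<alpha> \<beta>"
    unfolding cgs_def using total_cong[OF assms(1)] centralizes_total[OF assms(1) cong_sub[OF assms(2)] cong_sub[OF assms(3)]] by simp
  then show "congruence ar A (comm ar A \<alpha> \<beta>)"
    unfolding comm_alt by (intro Inter_cong) (auto simp: cgs_def)
  show "centralizes ar A \<alpha> \<beta> (comm ar A \<alpha> \<beta>)"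
    unfolding comm_alt by (intro centralizes_Inter) (auto simp: cgs_def)
qed

lemma comm_least: "congruence ar A \<delta> \<Longrightarrow> centralizes ar A \<alpha> \<beta> \<delta> \<Longrightarrow> comm ar A \<alpha> \<beta> \<subseteq> \<delta>"
  unfolding comm_def by blast

lemma comm_mono: "\<alpha>' \<subseteq> \<alpha> \<Longrightarrow> \<beta>' \<subseteq> \<beta> \<Longrightarrow> comm ar A \<alpha>' \<beta>' \<subseteq> comm ar A \<alpha> \<beta>"
  unfolding comm_def using centralizes_mono by blast

lemma comm_Id_iff:
  assumes "algebra ar A" "congruence ar A \<alpha>" "congruence ar A \<beta>"
  shows "comm ar A \<alpha> \<beta> = Id_on (car A) \<longleftrightarrow> centralizes ar A \<alpha> \<beta> (Id_on (car A))"
proof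
  assume "comm ar A \<alpha> \<beta> = Id_on (car A)" then show "centralizes ar A \<alpha> \<beta> (Id_on (car A))"
    using comm_props(2)[OF assms] by simp
next
  assume c: "centralizes ar A \<alpha> \<beta> (Id_on (car A))"
  have "comm ar A \<alpha> \<beta> \<subseteq> Id_on (car A)" using comm_least[OF Id_cong[OF assms(1)] c] .
  moreover have "Id_on (car A) \<subseteq> comm ar A \<alpha> \<beta>"
    using cong_refl[OF comm_props(1)[OF assms]] by auto
  ultimately show "comm ar A \<alpha> \<beta> = Id_on (car A)" by blast
qed

lemma Cg_props:
  assumes "algebra ar C" "R \<subseteq> car C \<times> car C"
  shows "congruence ar C (Cg ar C R)" "R \<subseteq> Cg ar C R"
proof -
  have "car C \<times> car C \<in> {\<theta>. congruence ar C \<theta> \<and> R \<subseteq> \<theta>}" using total_cong assms by blast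
  then show "congruence ar C (Cg ar C R)" unfolding Cg_def by (intro Inter_cong) auto
  show "R \<subseteq> Cg ar C R" unfolding Cg_def by blast
qed

lemma Cg_least: "congruence ar C \<theta> \<Longrightarrow> R \<subseteq> \<theta> \<Longrightarrow> Cg ar C R \<subseteq> \<theta>"
  unfolding Cg_def by blast

lemma car_cong_alg[simp]: "car (cong_alg A \<alpha>) = \<alpha>"
  by (simp add: cong_alg_def)
lemma opr_cong_alg[simp]: "opr (cong_alg A \<alpha>) f ps = (opr A f (map fst ps), opr A f (map snd ps))"
  by (simp add: cong_alg_def)

lemma cong_alg_algebra:
  assumes "algebra ar A" "congruence ar A \<alpha>"
  shows "algebra ar (cong_alg A \<alpha>)"
  unfolding algebra_def
proof (intro conjI allI impI)
  have "car A \<noteq> {}" using assms(1) unfolding algebra_def by simp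
  then obtain x where "x \<in> car A" by blast
  then have "(x, x) \<in> \<alpha>" by (rule cong_refl[OF assms(2)])
  then show "car (cong_alg A \<alpha>) \<noteq> {}" by auto
  fix f xs
  assume h: "length xs = ar f \<and> set xs \<subseteq> car (cong_alg A \<alpha>)"
  then have "list_all2 (\<lambda>x y. (x, y) \<in> \<alpha>) (map fst xs) (map snd xs)"
    unfolding list_all2_conv_all_nth by (simp add: subset_code(1))
  moreover have "length (map fst xs) = ar f" using h by simp
  ultimately have "(opr A f (map fst xs), opr A f (map snd xs)) \<in> \<alpha>"
    using assms(2) unfolding congruence_def by blast
  then show "opr (cong_alg A \<alpha>) f xs \<in> car (cong_alg A \<alpha>)" by simp
qed

definition polyK :: "('f \<Rightarrow> nat) \<Rightarrow> ('b, 'f) alg \<Rightarrow> ('b \<times> 'b) set \<Rightarrow> ('b \<times> 'b) set" where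
  "polyK ar C E = {(p, q). p \<in> car C \<and> q \<in> car C \<and>
     (\<forall>(s :: ('f, nat) trm) i \<rho>. wf_trm ar s \<and> (\<forall>v. \<rho> v \<in> car C) \<longrightarrow>
        (eval C (\<rho>(i := p)) s, eval C (\<rho>(i := q)) s) \<in> E)}"

lemma polyKD: fixes s :: "('f, nat) trm" shows "(p, q) \<in> polyK ar C E \<Longrightarrow> wf_trm ar s \<Longrightarrow> (\<And>v. \<rho> v \<in> car C) \<Longrightarrow>
   (eval C (\<rho>(i := p)) s, eval C (\<rho>(i := q)) s) \<in> E"
  unfolding polyK_def by blast

lemma polyK_sub: assumes "(p, q) \<in> polyK ar C E" shows "(p, q) \<in> E"
proof -
  have pc: "p \<in> car C" using assms unfolding polyK_def by blast
  have "(eval C ((\<lambda>_. p)(0 := p)) (Var 0 :: (_, nat) trm), eval C ((\<lambda>_. p)(0 := q)) (Var 0 :: (_, nat) trm)) \<in> E"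
    by (rule polyKD[OF assms]) (use pc in auto)
  then show ?thesis by simp
qed

lemma equivE_refl: "equiv S E \<Longrightarrow> x \<in> S \<Longrightarrow> (x, x) \<in> E"
  unfolding equiv_def refl_on_def by blast
lemma equivE_sym: "equiv S E \<Longrightarrow> (x, y) \<in> E \<Longrightarrow> (y, x) \<in> E"
  unfolding equiv_def sym_def by blast
lemma equivE_trans: "equiv S E \<Longrightarrow> (x, y) \<in> E \<Longrightarrow> (y, z) \<in> E \<Longrightarrow> (x, z) \<in> E"
  unfolding equiv_def trans_def by blast

lemma polyK_compat:
  fixes s :: "('f, nat) trm"
  assumes alg: "algebra ar C" and eq: "equiv (car C) E"
    and len: "length xs = ar f" and r: "list_all2 (\<lambda>x y. (x, y) \<in> polyK ar C E) xs ys"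
    and ws: "wf_trm ar s" and \<rho>c: "\<And>v. \<rho> v \<in> car C"
  shows "(eval C (\<rho>(i := opr C f xs)) s, eval C (\<rho>(i := opr C f ys)) s) \<in> E"
proof -
  define n where "n = length xs"
  have leny: "length ys = n" using r unfolding n_def by (simp add: list_all2_lengthD)
  have xy: "\<And>k. k < n \<Longrightarrow> (xs ! k, ys ! k) \<in> polyK ar C E"
    using r unfolding n_def by (simp add: list_all2_conv_all_nth)
  have xc: "\<And>k. k < n \<Longrightarrow> xs ! k \<in> car C" and yc: "\<And>k. k < n \<Longrightarrow> ys ! k \<in> car C"
    using xy unfolding polyK_def by blast+
  define M where "M = Suc (Max (insert i (vars_trm s)))"
  have vM: "\<And>v. v \<in> vars_trm s \<Longrightarrow> v < M"
    unfolding M_def using finite_vars[of s] by (simp add: le_imp_less_Suc)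
  have iM: "i < M" unfolding M_def using finite_vars[of s] by (simp add: le_imp_less_Suc)
  define \<sigma> where "\<sigma> = (\<lambda>v. if v = i then App f (map Var [M..<M+n]) else (Var v :: ('f, nat) trm))"
  define s' where "s' = subst \<sigma> s"
  have ws': "wf_trm ar s'" unfolding s'_def
    by (rule wf_subst[OF ws]) (simp add: \<sigma>_def len n_def)
  define \<rho>k where "\<rho>k = (\<lambda>k v. if M \<le> v \<and> v < M + n then (if v - M < k then ys ! (v - M) else xs ! (v - M)) else \<rho> v)"
  have \<rho>kc: "\<And>k v. \<rho>k k v \<in> car C" unfolding \<rho>k_def using xc yc \<rho>c by auto
  have ev: "eval C (\<rho>k k) s' = eval C (\<rho>(i := opr C f (map (\<rho>k k) [M..<M+n]))) s" for k
  proof -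
    have "eval C (\<rho>k k) s' = eval C (\<lambda>v. eval C (\<rho>k k) (\<sigma> v)) s"
      unfolding s'_def by (rule eval_subst)
    also have "\<dots> = eval C (\<rho>(i := opr C f (map (\<rho>k k) [M..<M+n]))) s"
    proof (rule eval_vars)
      fix v assume v: "v \<in> vars_trm s"
      show "eval C (\<rho>k k) (\<sigma> v) = (\<rho>(i := opr C f (map (\<rho>k k) [M..<M+n]))) v"
        using vM[OF v] by (auto simp: \<sigma>_def \<rho>k_def comp_def)
    qed
    finally show ?thesis .
  qed
  have m0: "map (\<rho>k 0) [M..<M+n] = xs"
    by (rule nth_equalityI) (auto simp: \<rho>k_def n_def)
  have mn: "map (\<rho>k n) [M..<M+n] = ys"
    by (rule nth_equalityI) (auto simp: \<rho>k_def leny)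
  have step: "(eval C (\<rho>k 0) s', eval C (\<rho>k k) s') \<in> E" if "k \<le> n" for k
    using that
  proof (induction k)
    case 0
    show ?case by (rule equivE_refl[OF eq eval_car[OF alg ws']]) (use \<rho>kc in auto)
  next
    case (Suc k)
    then have kn: "k < n" by simp
    have e1: "\<rho>k k = (\<rho>k k)(M + k := xs ! k)" by (rule ext) (use kn in \<open>auto simp: \<rho>k_def\<close>)
    have e2: "\<rho>k (Suc k) = (\<rho>k k)(M + k := ys ! k)" by (rule ext) (use kn in \<open>auto simp: \<rho>k_def\<close>)
    have "(eval C ((\<rho>k k)(M + k := xs ! k)) s', eval C ((\<rho>k k)(M + k := ys ! k)) s') \<in> E"
      by (rule polyKD[OF xy[OF kn] ws' \<rho>kc])
    then have "(eval C (\<rho>k k) s', eval C (\<rho>k (Suc k)) s') \<in> E" using e1 e2 by simp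
    then show ?case using Suc by (auto intro: equivE_trans[OF eq])
  qed
  from step[of n] show ?thesis using ev[of 0] ev[of n] m0 mn by simp
qed

lemma polyK_cong:
  assumes alg: "algebra ar C" and eq: "equiv (car C) E"
  shows "congruence ar C (polyK ar C E)"
proof (rule congruenceI)
  show "polyK ar C E \<subseteq> car C \<times> car C" unfolding polyK_def by blast
  show "(x, x) \<in> polyK ar C E" if "x \<in> car C" for x
    unfolding polyK_def
  proof (safe intro!: that)
    fix s :: "(_, nat) trm" and i and \<rho> :: "nat \<Rightarrow> _" assume "wf_trm ar s" "\<forall>v. \<rho> v \<in> car C"
    then have "eval C (\<rho>(i := x)) s \<in> car C" using that by (intro eval_car[OF alg]) auto
    then show "(eval C (\<rho>(i := x)) s, eval C (\<rho>(i := x)) s) \<in> E" by (rule equivE_refl[OF eq])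
  qed
  show "(y, x) \<in> polyK ar C E" if "(x, y) \<in> polyK ar C E" for x y
    using that unfolding polyK_def using equivE_sym[OF eq] by blast
  show "(x, z) \<in> polyK ar C E" if "(x, y) \<in> polyK ar C E" "(y, z) \<in> polyK ar C E" for x y z
    using that unfolding polyK_def using equivE_trans[OF eq] by blast
  show "(opr C f xs, opr C f ys) \<in> polyK ar C E"
    if len: "length xs = ar f" and r: "list_all2 (\<lambda>x y. (x, y) \<in> polyK ar C E) xs ys" for f xs ys
  proof -
    have "set xs \<subseteq> car C" "set ys \<subseteq> car C" "length ys = ar f"
      using r len unfolding polyK_def by (auto simp: list_all2_conv_all_nth set_conv_nth)
    then have "opr C f xs \<in> car C" "opr C f ys \<in> car C" using alg len unfolding algebra_def by auto
    then show ?thesis unfolding polyK_def using polyK_compat[OF alg eq len r] by blast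
  qed
qed

definition gens :: "('a \<times> 'a) set \<Rightarrow> (('a \<times> 'a) \<times> ('a \<times> 'a)) set" where
  "gens \<beta> = {((u, u), (v, v)) | u v. (u, v) \<in> \<beta>}"

lemma Delta_gens: "Delta ar A \<alpha> \<beta> = Cg ar (cong_alg A \<alpha>) (gens \<beta>)"
  unfolding Delta_def gens_def by simp

lemma apply3_subst:
  "eval B \<rho> (subst (\<lambda>n. if n = 0 then t0 else if n = 1 then t1 else t2) d) =
   apply3 B d (eval B \<rho> t0) (eval B \<rho> t1) (eval B \<rho> t2)"
  unfolding apply3_def eval_subst by (rule arg_cong[where f="\<lambda>r. eval B r d"]) (rule ext, auto)

lemma apply3_cong_alg:
  "apply3 (cong_alg A \<alpha>) d p q r = (apply3 A d (fst p) (fst q) (fst r), apply3 A d (snd p) (snd q) (snd r))"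
  unfolding apply3_def eval_cong_alg
  by (auto intro!: arg_cong[where f="\<lambda>r. eval A r d"] simp: comp_def)

lemma apply3_cong:
  assumes "congruence ar B \<theta>" "wf_trm ar d" "(p, p') \<in> \<theta>" "(q, q') \<in> \<theta>" "(r, r') \<in> \<theta>"
  shows "(apply3 B d p q r, apply3 B d p' q' r') \<in> \<theta>"
  unfolding apply3_def using assms by (intro cong_eval) auto

lemma apply3_car:
  assumes "algebra ar B" "wf_trm ar d" "p \<in> car B" "q \<in> car B" "r \<in> car B"
  shows "apply3 B d p q r \<in> car B"
  unfolding apply3_def using assms by (intro eval_car) auto

context
  fixes ar :: "'f \<Rightarrow> nat" and A :: "('a, 'f) alg" and \<alpha> \<beta> :: "('a \<times> 'a) set"
  assumes alg: "algebra ar A" and ca: "congruence ar A \<alpha>" and cb: "congruence ar A \<beta>"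
begin

lemma algC: "algebra ar (cong_alg A \<alpha>)" by (rule cong_alg_algebra[OF alg ca])

lemma gens_sub: "gens \<beta> \<subseteq> car (cong_alg A \<alpha>) \<times> car (cong_alg A \<alpha>)"
  unfolding gens_def using cong_carD[OF cb] cong_refl[OF ca] by auto

lemma Delta_cong: "congruence ar (cong_alg A \<alpha>) (Delta ar A \<alpha> \<beta>)"
  unfolding Delta_gens by (rule Cg_props(1)[OF algC gens_sub])

lemma Delta_gen: "(u, v) \<in> \<beta> \<Longrightarrow> ((u, u), (v, v)) \<in> Delta ar A \<alpha> \<beta>"
  unfolding Delta_gens using Cg_props(2)[OF algC gens_sub] unfolding gens_def by blast

lemma Delta_least: "congruence ar (cong_alg A \<alpha>) \<theta> \<Longrightarrow> gens \<beta> \<subseteq> \<theta> \<Longrightarrow> Delta ar A \<alpha> \<beta> \<subseteq> \<theta>"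
  unfolding Delta_gens by (rule Cg_least)

lemma Delta_refl: "(x, y) \<in> \<alpha> \<Longrightarrow> ((x, y), (x, y)) \<in> Delta ar A \<alpha> \<beta>"
  using cong_refl[OF Delta_cong] by simp
lemma Delta_sym: "(p, q) \<in> Delta ar A \<alpha> \<beta> \<Longrightarrow> (q, p) \<in> Delta ar A \<alpha> \<beta>"
  using cong_sym[OF Delta_cong] by blast
lemma Delta_trans: "(p, q) \<in> Delta ar A \<alpha> \<beta> \<Longrightarrow> (q, r) \<in> Delta ar A \<alpha> \<beta> \<Longrightarrow> (p, r) \<in> Delta ar A \<alpha> \<beta>"
  using cong_trans[OF Delta_cong] by blast

definition Rbb where "Rbb = {(p, q). p \<in> \<alpha> \<and> q \<in> \<alpha> \<and> (fst p, fst q) \<in> \<beta> \<and> (snd p, snd q) \<in> \<beta>}"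

lemma Rbb_cong: "congruence ar (cong_alg A \<alpha>) Rbb"
proof (rule congruenceI)
  show "Rbb \<subseteq> car (cong_alg A \<alpha>) \<times> car (cong_alg A \<alpha>)" unfolding Rbb_def by auto
  show "(x, x) \<in> Rbb" if "x \<in> car (cong_alg A \<alpha>)" for x
    using that cong_carD[OF ca] cong_refl[OF cb] unfolding Rbb_def by (cases x) auto
  show "(y, x) \<in> Rbb" if "(x, y) \<in> Rbb" for x y
    using that cong_sym[OF cb] unfolding Rbb_def by auto
  show "(x, z) \<in> Rbb" if "(x, y) \<in> Rbb" "(y, z) \<in> Rbb" for x y z
    using that cong_trans[OF cb] unfolding Rbb_def by auto
  show "(opr (cong_alg A \<alpha>) f xs, opr (cong_alg A \<alpha>) f ys) \<in> Rbb"
    if len: "length xs = ar f" and r: "list_all2 (\<lambda>x y. (x, y) \<in> Rbb) xs ys" for f xs ys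
  proof -
    have c: "\<And>x y. (x, y) \<in> Rbb \<Longrightarrow> (x, y) \<in> car (cong_alg A \<alpha>) \<times> car (cong_alg A \<alpha>)"
      unfolding Rbb_def by auto
    have "(opr (cong_alg A \<alpha>) f xs, opr (cong_alg A \<alpha>) f ys) \<in> car (cong_alg A \<alpha>) \<times> car (cong_alg A \<alpha>)"
      using total_cong[OF algC] len r c unfolding congruence_def
      by (metis (no_types, lifting) list_all2_mono)
    moreover have "list_all2 (\<lambda>x y. (x, y) \<in> \<beta>) (map fst xs) (map fst ys)"
      using r unfolding Rbb_def by (auto simp: list_all2_conv_all_nth)
    moreover have "list_all2 (\<lambda>x y. (x, y) \<in> \<beta>) (map snd xs) (map snd ys)"
      using r unfolding Rbb_def by (auto simp: list_all2_conv_all_nth)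
    ultimately show ?thesis using cb len unfolding congruence_def Rbb_def by auto
  qed
qed

lemma Delta_D:
  assumes "((x, y), (u, v)) \<in> Delta ar A \<alpha> \<beta>"
  shows "(x, y) \<in> \<alpha>" "(u, v) \<in> \<alpha>" "(x, u) \<in> \<beta>" "(y, v) \<in> \<beta>"
proof -
  have "gens \<beta> \<subseteq> Rbb" unfolding gens_def Rbb_def
    using cong_carD[OF cb] cong_refl[OF ca] by auto
  then have "Delta ar A \<alpha> \<beta> \<subseteq> Rbb" by (rule Delta_least[OF Rbb_cong])
  then show "(x, y) \<in> \<alpha>" "(u, v) \<in> \<alpha>" "(x, u) \<in> \<beta>" "(y, v) \<in> \<beta>"
    using assms unfolding Rbb_def by auto
qed

lemma Delta_apply3:
  assumes "wf_trm ar d" "(p, p') \<in> Delta ar A \<alpha> \<beta>" "(q, q') \<in> Delta ar A \<alpha> \<beta>" "(r, r') \<in> Delta ar A \<alpha> \<beta>"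
  shows "((apply3 A d (fst p) (fst q) (fst r), apply3 A d (snd p) (snd q) (snd r)),
          (apply3 A d (fst p') (fst q') (fst r'), apply3 A d (snd p') (snd q') (snd r'))) \<in> Delta ar A \<alpha> \<beta>"
  using apply3_cong[OF Delta_cong assms] unfolding apply3_cong_alg .

lemma Delta_term:
  assumes "wf_trm ar t" "\<And>v. v \<in> vars_trm t \<Longrightarrow> (\<rho> v, \<rho>' v) \<in> Delta ar A \<alpha> \<beta>"
  shows "((eval A (fst \<circ> \<rho>) t, eval A (snd \<circ> \<rho>) t), (eval A (fst \<circ> \<rho>') t, eval A (snd \<circ> \<rho>') t)) \<in> Delta ar A \<alpha> \<beta>"
  using cong_eval[OF Delta_cong assms] unfolding eval_cong_alg .

lemma Delta_sub_E:
  assumes eq: "equiv \<alpha> E"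
    and mat: "\<And>(s :: ('f, nat) trm) i \<rho> u v. wf_trm ar s \<Longrightarrow> (\<forall>k. \<rho> k \<in> \<alpha>) \<Longrightarrow> (u, v) \<in> \<beta> \<Longrightarrow>
        (eval (cong_alg A \<alpha>) (\<rho>(i := (u, u))) s, eval (cong_alg A \<alpha>) (\<rho>(i := (v, v))) s) \<in> E"
  shows "Delta ar A \<alpha> \<beta> \<subseteq> E"
proof -
  have eq': "equiv (car (cong_alg A \<alpha>)) E" using eq by simp
  have "gens \<beta> \<subseteq> polyK ar (cong_alg A \<alpha>) E"
  proof
    fix g assume "g \<in> gens \<beta>"
    then obtain u v where g: "g = ((u, u), (v, v))" "(u, v) \<in> \<beta>" unfolding gens_def by blast
    have "(u, u) \<in> \<alpha>" "(v, v) \<in> \<alpha>" using cong_carD[OF cb g(2)] cong_refl[OF ca] by auto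
    then show "g \<in> polyK ar (cong_alg A \<alpha>) E" unfolding polyK_def g(1) using mat g(2) by auto
  qed
  then have "Delta ar A \<alpha> \<beta> \<subseteq> polyK ar (cong_alg A \<alpha>) E"
    by (rule Delta_least[OF polyK_cong[OF algC eq']])
  then show ?thesis using polyK_sub by (metis subrelI subsetD)
qed

end

lemma eval_subst_var: "eval A \<rho> (subst (\<lambda>k. Var (g k)) s) = eval A (\<rho> \<circ> g) s"
  unfolding eval_subst by (simp add: comp_def)

lemma wf_subst_var: "wf_trm ar s \<Longrightarrow> wf_trm ar (subst (\<lambda>k. Var (g k)) s)"
  by (rule wf_subst) auto

lemma centralizesD:
  fixes t :: "('f, nat + nat) trm"
  assumes "centralizes ar A \<alpha> \<beta> \<delta>" "wf_trm ar t" "\<forall>i. (a i, b i) \<in> \<alpha>" "\<forall>j. (c j, d j) \<in> \<beta>"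
    "(eval A (case_sum a c) t, eval A (case_sum a d) t) \<in> \<delta>"
  shows "(eval A (case_sum b c) t, eval A (case_sum b d) t) \<in> \<delta>"
  using assms unfolding centralizes_def
  apply -
  apply (erule allE[where x=t], erule impE, assumption)
  apply (erule allE[where x=a], erule allE[where x=b], erule allE[where x=c], erule allE[where x=d])
  apply (erule impE, blast)
  apply (erule impE, assumption, assumption)
  done

context
  fixes ar :: "'f \<Rightarrow> nat" and A :: "('a, 'f) alg" and \<alpha> \<beta> :: "('a \<times> 'a) set"
  assumes alg: "algebra ar A" and ca: "congruence ar A \<alpha>" and cb: "congruence ar A \<beta>"
begin

lemma fst_upd: "fst \<circ> (\<rho>(i := (u, u'))) = (fst \<circ> \<rho>)(i := u)" by (rule ext) auto
lemma snd_upd: "snd \<circ> (\<rho>(i := (u, u'))) = (snd \<circ> \<rho>)(i := u')" by (rule ext) auto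

lemma matrix1:
  fixes s :: "('f, nat) trm"
  assumes wfd: "wf_trm ar d" and dxx: "\<And>x w. x \<in> car A \<Longrightarrow> w \<in> car A \<Longrightarrow> apply3 A d x x w = w"
    and cent: "centralizes ar A \<alpha> \<beta> \<delta>" and cd: "congruence ar A \<delta>"
    and ws: "wf_trm ar s" and \<rho>: "\<forall>k. \<rho> k \<in> \<alpha>" and uv: "(u, v) \<in> \<beta>" and w: "w \<in> car A"
  shows "(apply3 A d (eval A ((snd \<circ> \<rho>)(i := u)) s) (eval A ((fst \<circ> \<rho>)(i := u)) s) w,
          apply3 A d (eval A ((snd \<circ> \<rho>)(i := v)) s) (eval A ((fst \<circ> \<rho>)(i := v)) s) w) \<in> \<delta>"
proof -
  define s1 where "s1 = subst (\<lambda>k. Var (if k = i then Inr (0::nat) else Inl (2 * k + 1))) s"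
  define s2 where "s2 = subst (\<lambda>k. Var (if k = i then Inr (0::nat) else Inl (2 * k + 2))) s"
  define S where "S = subst (\<lambda>n. if n = 0 then s1 else if n = 1 then s2 else Var (Inl 0)) d"
  have wS: "wf_trm ar S" unfolding S_def s1_def s2_def
    by (rule wf_subst[OF wfd]) (auto intro: wf_subst_var[OF ws])
  define P1 where "P1 = (\<lambda>n::nat. if n = 0 then w else if odd n then fst (\<rho> ((n - 1) div 2)) else fst (\<rho> ((n - 2) div 2)))"
  define P2 where "P2 = (\<lambda>n::nat. if n = 0 then w else if odd n then snd (\<rho> ((n - 1) div 2)) else fst (\<rho> ((n - 2) div 2)))"
  have evS: "eval A (case_sum P c) S = apply3 A d (eval A (\<lambda>k. if k = i then c 0 else P (2 * k + 1)) s)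
             (eval A (\<lambda>k. if k = i then c 0 else P (2 * k + 2)) s) (P 0)" for P c
  proof -
    have a: "case_sum P c \<circ> (\<lambda>k. if k = i then Inr (0::nat) else Inl (2 * k + 1)) = (\<lambda>k. if k = i then c 0 else P (2 * k + 1))"
      by (rule ext) simp
    have b: "case_sum P c \<circ> (\<lambda>k. if k = i then Inr (0::nat) else Inl (2 * k + 2)) = (\<lambda>k. if k = i then c 0 else P (2 * k + 2))"
      by (rule ext) simp
    show ?thesis unfolding S_def apply3_subst s1_def s2_def eval_subst_var a b by simp
  qed
  have f1: "(\<lambda>k. if k = i then x else P1 (2 * k + 1)) = (fst \<circ> \<rho>)(i := x)" for x
    by (rule ext) (simp add: P1_def)
  have f2: "(\<lambda>k. if k = i then x else P1 (2 * k + 2)) = (fst \<circ> \<rho>)(i := x)" for x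
    by (rule ext) (simp add: P1_def)
  have f3: "(\<lambda>k. if k = i then x else P2 (2 * k + 1)) = (snd \<circ> \<rho>)(i := x)" for x
    by (rule ext) (simp add: P2_def)
  have f4: "(\<lambda>k. if k = i then x else P2 (2 * k + 2)) = (fst \<circ> \<rho>)(i := x)" for x
    by (rule ext) (simp add: P2_def)
  have \<rho>c: "fst (\<rho> k) \<in> car A" "snd (\<rho> k) \<in> car A" for k using \<rho> cong_carD[OF ca] by (metis prod.collapse)+
  have uc: "u \<in> car A" "v \<in> car A" using cong_carD[OF cb uv] by auto
  have ec: "eval A ((fst \<circ> \<rho>)(i := x)) s \<in> car A" if "x \<in> car A" for x
    using that \<rho>c by (intro eval_car[OF alg ws]) auto
  have P12: "\<forall>n. (P1 n, P2 n) \<in> \<alpha>"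
    unfolding P1_def P2_def using \<rho> w cong_refl[OF ca] \<rho>c by auto
  have base: "(eval A (case_sum P1 (\<lambda>_. u)) S, eval A (case_sum P1 (\<lambda>_. v)) S) \<in> \<delta>"
    unfolding evS f1 f2 using dxx ec uc w cong_refl[OF cd] by (simp add: P1_def)
  have "(eval A (case_sum P2 (\<lambda>_. u)) S, eval A (case_sum P2 (\<lambda>_. v)) S) \<in> \<delta>"
    by (rule centralizesD[OF cent wS P12 _ base]) (use uv in simp)
  then show ?thesis unfolding evS f3 f4 by (simp add: P2_def)
qed

lemma matrix2:
  fixes s :: "('f, nat) trm"
  assumes cent: "centralizes ar A \<beta> \<alpha> \<delta>"
    and ws: "wf_trm ar s" and \<rho>: "\<forall>k. \<rho> k \<in> \<alpha>" and uv: "(u, v) \<in> \<beta>"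
    and h: "(eval A ((fst \<circ> \<rho>)(i := u)) s, eval A ((snd \<circ> \<rho>)(i := u)) s) \<in> \<delta>"
  shows "(eval A ((fst \<circ> \<rho>)(i := v)) s, eval A ((snd \<circ> \<rho>)(i := v)) s) \<in> \<delta>"
proof -
  define t where "t = subst (\<lambda>k. Var (if k = i then Inl (0::nat) else Inr k)) s"
  have wt: "wf_trm ar t" unfolding t_def by (rule wf_subst_var[OF ws])
  have ev: "eval A (case_sum a c) t = eval A (c(i := a 0)) s" for a c
  proof -
    have "case_sum a c \<circ> (\<lambda>k. if k = i then Inl (0::nat) else Inr k) = c(i := a 0)"
      by (rule ext) simp
    then show ?thesis unfolding t_def eval_subst_var by simp
  qed
  have r1: "\<forall>j. ((fst \<circ> \<rho>) j, (snd \<circ> \<rho>) j) \<in> \<alpha>" using \<rho> by simp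
  have r2: "\<forall>n. ((\<lambda>_::nat. u) n, (\<lambda>_::nat. v) n) \<in> \<beta>" using uv by simp
  have h': "(eval A (case_sum (\<lambda>_::nat. u) (fst \<circ> \<rho>)) t, eval A (case_sum (\<lambda>_::nat. u) (snd \<circ> \<rho>)) t) \<in> \<delta>"
    unfolding ev using h by simp
  have "(eval A (case_sum (\<lambda>_::nat. v) (fst \<circ> \<rho>)) t, eval A (case_sum (\<lambda>_::nat. v) (snd \<circ> \<rho>)) t) \<in> \<delta>"
    by (rule centralizesD[OF cent wt r2 r1 h'])
  then show ?thesis unfolding ev by simp
qed

end

context
  fixes ar :: "'f \<Rightarrow> nat" and A :: "('a, 'f) alg" and \<alpha> \<beta> :: "('a \<times> 'a) set"
  assumes alg: "algebra ar A" and ca: "congruence ar A \<alpha>" and cb: "congruence ar A \<beta>"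
begin

lemma eval_C_upd:
  "eval (cong_alg A \<alpha>) (\<rho>(i := (u, u))) s = (eval A ((fst \<circ> \<rho>)(i := u)) s, eval A ((snd \<circ> \<rho>)(i := u)) s)"
proof -
  have "fst \<circ> \<rho>(i := (u, u)) = (fst \<circ> \<rho>)(i := u)" "snd \<circ> \<rho>(i := (u, u)) = (snd \<circ> \<rho>)(i := u)"
    by (rule ext, simp)+
  then show ?thesis unfolding eval_cong_alg by simp
qed

definition E1 where "E1 d \<delta> = {(p, q). p \<in> \<alpha> \<and> q \<in> \<alpha> \<and>
   (\<forall>w\<in>car A. (apply3 A d (snd p) (fst p) w, apply3 A d (snd q) (fst q) w) \<in> \<delta>)}"

lemma E1_equiv:
  assumes wfd: "wf_trm ar d" and cd: "congruence ar A \<delta>"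
  shows "equiv \<alpha> (E1 d \<delta>)"
  unfolding equiv_def refl_on_def sym_def trans_def
proof (intro conjI allI impI ballI)
  show "E1 d \<delta> \<subseteq> \<alpha> \<times> \<alpha>" unfolding E1_def by auto
  fix p assume p: "p \<in> \<alpha>"
  have "\<And>w. w \<in> car A \<Longrightarrow> apply3 A d (snd p) (fst p) w \<in> car A"
    using p cong_carD[OF ca, of "fst p" "snd p"] by (intro apply3_car[OF alg wfd]) auto
  then show "(p, p) \<in> E1 d \<delta>" unfolding E1_def using p cong_refl[OF cd] by auto
next
  fix p q assume "(p, q) \<in> E1 d \<delta>"
  then show "(q, p) \<in> E1 d \<delta>" unfolding E1_def using cong_sym[OF cd] by auto
next
  fix p q r assume "(p, q) \<in> E1 d \<delta>" "(q, r) \<in> E1 d \<delta>"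
  then show "(p, r) \<in> E1 d \<delta>" unfolding E1_def using cong_trans[OF cd] by blast
qed

lemma Delta_E1:
  assumes wfd: "wf_trm ar d" and dxx: "\<And>x w. x \<in> car A \<Longrightarrow> w \<in> car A \<Longrightarrow> apply3 A d x x w = w"
    and cent: "centralizes ar A \<alpha> \<beta> \<delta>" and cd: "congruence ar A \<delta>"
  shows "Delta ar A \<alpha> \<beta> \<subseteq> E1 d \<delta>"
proof (rule Delta_sub_E[OF alg ca cb E1_equiv[OF wfd cd]])
  fix s :: "('f, nat) trm" and i and \<rho> :: "nat \<Rightarrow> 'a \<times> 'a" and u v
  assume ws: "wf_trm ar s" and \<rho>: "\<forall>k. \<rho> k \<in> \<alpha>" and uv: "(u, v) \<in> \<beta>"
  have in1: "eval (cong_alg A \<alpha>) (\<rho>(i := (u, u))) s \<in> \<alpha>" "eval (cong_alg A \<alpha>) (\<rho>(i := (v, v))) s \<in> \<alpha>"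
    using eval_car[OF algC[OF alg ca cb] ws] \<rho> cong_carD[OF cb uv] cong_refl[OF ca] by auto
  show "(eval (cong_alg A \<alpha>) (\<rho>(i := (u, u))) s, eval (cong_alg A \<alpha>) (\<rho>(i := (v, v))) s) \<in> E1 d \<delta>"
    unfolding E1_def using in1 matrix1[OF alg ca cb wfd dxx cent cd ws \<rho> uv] unfolding eval_C_upd by auto
qed

definition E2 where "E2 \<delta> = {(p, q). p \<in> \<alpha> \<and> q \<in> \<alpha> \<and> ((fst p, snd p) \<in> \<delta> \<longleftrightarrow> (fst q, snd q) \<in> \<delta>)}"

lemma E2_equiv: "equiv \<alpha> (E2 \<delta>)"
  unfolding equiv_def refl_on_def sym_def trans_def E2_def by auto

lemma Delta_E2:
  assumes cent: "centralizes ar A \<beta> \<alpha> \<delta>"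
  shows "Delta ar A \<alpha> \<beta> \<subseteq> E2 \<delta>"
proof (rule Delta_sub_E[OF alg ca cb E2_equiv])
  fix s :: "('f, nat) trm" and i and \<rho> :: "nat \<Rightarrow> 'a \<times> 'a" and u v
  assume ws: "wf_trm ar s" and \<rho>: "\<forall>k. \<rho> k \<in> \<alpha>" and uv: "(u, v) \<in> \<beta>"
  have vu: "(v, u) \<in> \<beta>" using cong_sym[OF cb uv] .
  have in1: "eval (cong_alg A \<alpha>) (\<rho>(i := (u, u))) s \<in> \<alpha>" "eval (cong_alg A \<alpha>) (\<rho>(i := (v, v))) s \<in> \<alpha>"
    using eval_car[OF algC[OF alg ca cb] ws] \<rho> cong_carD[OF cb uv] cong_refl[OF ca] by auto
  show "(eval (cong_alg A \<alpha>) (\<rho>(i := (u, u))) s, eval (cong_alg A \<alpha>) (\<rho>(i := (v, v))) s) \<in> E2 \<delta>"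
    unfolding E2_def using in1 matrix2[OF alg ca cb cent ws \<rho> uv] matrix2[OF alg ca cb cent ws \<rho> vu]
    unfolding eval_C_upd by auto
qed

lemma core1:
  assumes wfd: "wf_trm ar d" and dxx: "\<And>x w. x \<in> car A \<Longrightarrow> w \<in> car A \<Longrightarrow> apply3 A d x x w = w"
    and ddiff: "\<And>\<theta> x y. congruence ar A \<theta> \<Longrightarrow> (x, y) \<in> \<theta> \<Longrightarrow> (apply3 A d x y y, x) \<in> comm ar A \<theta> \<theta>"
    and cent: "centralizes ar A \<alpha> \<beta> \<delta>" and cd: "congruence ar A \<delta>"
    and csub: "comm ar A (\<alpha> \<inter> \<beta>) (\<alpha> \<inter> \<beta>) \<subseteq> \<delta>"
    and D: "((a, b), (a, e)) \<in> Delta ar A \<alpha> \<beta>"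
  shows "(b, e) \<in> \<delta>"
proof -
  have ab: "(a, b) \<in> \<alpha>" and ae: "(a, e) \<in> \<alpha>" and be: "(b, e) \<in> \<beta>"
    using Delta_D[OF alg ca cb D] by auto
  have bc: "b \<in> car A" and ec: "e \<in> car A" and ac: "a \<in> car A"
    using cong_carD[OF ca ab] cong_carD[OF ca ae] by auto
  have bb: "(b, b) \<in> \<alpha>" using cong_refl[OF ca bc] .
  define f where "f = apply3 A d e b b"
  have "((apply3 A d (fst (a, b)) (fst (a, b)) (fst (b, b)), apply3 A d (snd (a, b)) (snd (a, b)) (snd (b, b))),
         (apply3 A d (fst (a, e)) (fst (a, b)) (fst (b, b)), apply3 A d (snd (a, e)) (snd (a, b)) (snd (b, b))))
        \<in> Delta ar A \<alpha> \<beta>"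
    by (rule Delta_apply3[OF alg ca cb wfd D Delta_refl[OF alg ca cb ab] Delta_refl[OF alg ca cb bb]])
  then have D2: "((b, b), (b, f)) \<in> Delta ar A \<alpha> \<beta>" using dxx ac bc unfolding f_def by simp
  have "((b, b), (b, f)) \<in> E1 d \<delta>" using Delta_E1[OF wfd dxx cent cd] D2 by blast
  then have "(apply3 A d b b b, apply3 A d f b b) \<in> \<delta>" unfolding E1_def using bc by auto
  then have bf1: "(b, apply3 A d f b b) \<in> \<delta>" using dxx bc by simp
  define \<theta> where "\<theta> = \<alpha> \<inter> \<beta>"
  have ct: "congruence ar A \<theta>" unfolding \<theta>_def by (rule Int_cong[OF ca cb])
  have eb: "(e, b) \<in> \<theta>" unfolding \<theta>_def using ab ae be cong_sym[OF ca] cong_trans[OF ca] cong_sym[OF cb] by blast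
  have "(apply3 A d e b b, apply3 A d b b b) \<in> \<theta>"
    by (rule apply3_cong[OF ct wfd eb]) (use cong_refl[OF ct bc] in auto)
  then have fb: "(f, b) \<in> \<theta>" unfolding f_def using dxx bc by simp
  have "(apply3 A d f b b, f) \<in> \<delta>" using ddiff[OF ct fb] csub unfolding \<theta>_def by blast
  then have bf: "(b, f) \<in> \<delta>" using bf1 cong_trans[OF cd] by blast
  have "(f, e) \<in> \<delta>" using ddiff[OF ct eb] csub unfolding \<theta>_def f_def by blast
  then show ?thesis using bf cong_trans[OF cd] by blast
qed

lemma core2:
  assumes wfm: "wf_trm ar m"
    and mxx: "\<And>x y. (x, y) \<in> \<alpha> \<Longrightarrow> apply3 A m x x y = y"
    and myxx: "\<And>x y. (x, y) \<in> \<alpha> \<Longrightarrow> apply3 A m y x x = y"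
    and cent: "centralizes ar A \<beta> \<alpha> \<delta>" and cd: "congruence ar A \<delta>"
    and D: "((a, b), (a, e)) \<in> Delta ar A \<alpha> \<beta>"
  shows "(b, e) \<in> \<delta>"
proof -
  have ab: "(a, b) \<in> \<alpha>" and ae: "(a, e) \<in> \<alpha>"
    using Delta_D[OF alg ca cb D] by auto
  have bc: "b \<in> car A" using cong_carD[OF ca ab] by auto
  have bb: "(b, b) \<in> \<alpha>" using cong_refl[OF ca bc] .
  have be: "(b, e) \<in> \<alpha>" using ab ae cong_sym[OF ca] cong_trans[OF ca] by blast
  have "((apply3 A m (fst (a, b)) (fst (a, b)) (fst (b, b)), apply3 A m (snd (a, b)) (snd (a, b)) (snd (b, b))),
         (apply3 A m (fst (a, e)) (fst (a, b)) (fst (b, b)), apply3 A m (snd (a, e)) (snd (a, b)) (snd (b, b))))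
        \<in> Delta ar A \<alpha> \<beta>"
    by (rule Delta_apply3[OF alg ca cb wfm D Delta_refl[OF alg ca cb ab] Delta_refl[OF alg ca cb bb]])
  then have D2: "((b, b), (b, e)) \<in> Delta ar A \<alpha> \<beta>" using mxx[OF ab] mxx[OF bb] myxx[OF be] by simp
  have "((b, b), (b, e)) \<in> E2 \<delta>" using Delta_E2[OF cent] D2 by blast
  moreover have "(b, b) \<in> \<delta>" using cong_refl[OF cd bc] .
  ultimately show ?thesis unfolding E2_def by auto
qed

end

context
  fixes ar :: "'f \<Rightarrow> nat" and A :: "('a, 'f) alg" and \<alpha> \<beta> :: "('a \<times> 'a) set" and m
  assumes alg: "algebra ar A" and ca: "congruence ar A \<alpha>" and cb: "congruence ar A \<beta>"
    and wfm: "wf_trm ar m"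
    and mxx: "\<And>x y. (x, y) \<in> \<alpha> \<Longrightarrow> apply3 A m x x y = y"
    and myxx: "\<And>x y. (x, y) \<in> \<alpha> \<Longrightarrow> apply3 A m y x x = y"
begin

lemma a_sym: "(x, y) \<in> \<alpha> \<Longrightarrow> (y, x) \<in> \<alpha>" using cong_sym[OF ca] .
lemma a_trans: "(x, y) \<in> \<alpha> \<Longrightarrow> (y, z) \<in> \<alpha> \<Longrightarrow> (x, z) \<in> \<alpha>" using cong_trans[OF ca] .

lemma shift:
  assumes D: "((p, q), (p, r)) \<in> Delta ar A \<alpha> \<beta>" and xp: "(x, p) \<in> \<alpha>"
  shows "((x, q), (x, r)) \<in> Delta ar A \<alpha> \<beta>"
proof -
  have pq: "(p, q) \<in> \<alpha>" and pr: "(p, r) \<in> \<alpha>" using Delta_D[OF alg ca cb D] by auto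
  have xq: "(x, q) \<in> \<alpha>" using a_trans[OF xp pq] .
  have qr: "(q, r) \<in> \<alpha>" using a_trans[OF a_sym[OF pq] pr] .
  have qq: "(q, q) \<in> \<alpha>" using a_trans[OF a_sym[OF pq] pq] .
  have "((apply3 A m (fst (p, q)) (fst (p, q)) (fst (x, q)), apply3 A m (snd (p, q)) (snd (p, q)) (snd (x, q))),
         (apply3 A m (fst (p, r)) (fst (p, q)) (fst (x, q)), apply3 A m (snd (p, r)) (snd (p, q)) (snd (x, q))))
        \<in> Delta ar A \<alpha> \<beta>"
    by (rule Delta_apply3[OF alg ca cb wfm D Delta_refl[OF alg ca cb pq] Delta_refl[OF alg ca cb xq]])
  then show ?thesis using mxx[OF a_sym[OF xp]] mxx[OF qq] myxx[OF qr] by simp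
qed

definition Rho where "Rho = {(y, z). (y, z) \<in> \<alpha> \<and> ((y, y), (y, z)) \<in> Delta ar A \<alpha> \<beta>}"

lemma Rho_cong: "congruence ar A Rho"
proof (rule congruenceI)
  show "Rho \<subseteq> car A \<times> car A" unfolding Rho_def using cong_sub[OF ca] by auto
  show "(x, x) \<in> Rho" if "x \<in> car A" for x
    unfolding Rho_def using cong_refl[OF ca that] Delta_refl[OF alg ca cb] by auto
  show "(y, x) \<in> Rho" if "(x, y) \<in> Rho" for x y
  proof -
    have xy: "(x, y) \<in> \<alpha>" and D: "((x, x), (x, y)) \<in> Delta ar A \<alpha> \<beta>" using that unfolding Rho_def by auto
    have "((y, x), (y, y)) \<in> Delta ar A \<alpha> \<beta>" by (rule shift[OF D a_sym[OF xy]])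
    then show ?thesis unfolding Rho_def using a_sym[OF xy] Delta_sym[OF alg ca cb] by auto
  qed
  show "(x, z) \<in> Rho" if "(x, y) \<in> Rho" "(y, z) \<in> Rho" for x y z
  proof -
    have xy: "(x, y) \<in> \<alpha>" and D1: "((x, x), (x, y)) \<in> Delta ar A \<alpha> \<beta>" using that(1) unfolding Rho_def by auto
    have yz: "(y, z) \<in> \<alpha>" and D2: "((y, y), (y, z)) \<in> Delta ar A \<alpha> \<beta>" using that(2) unfolding Rho_def by auto
    have "((x, y), (x, z)) \<in> Delta ar A \<alpha> \<beta>" by (rule shift[OF D2 xy])
    then show ?thesis unfolding Rho_def using a_trans[OF xy yz] Delta_trans[OF alg ca cb D1] by auto
  qed
  show "(opr A f xs, opr A f ys) \<in> Rho"
    if len: "length xs = ar f" and r: "list_all2 (\<lambda>x y. (x, y) \<in> Rho) xs ys" for f xs ys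
  proof -
    have ly: "length ys = length xs" using r by (simp add: list_all2_lengthD)
    have ra: "list_all2 (\<lambda>x y. (x, y) \<in> \<alpha>) xs ys" using r unfolding Rho_def by (rule list_all2_mono) auto
    then have fa: "(opr A f xs, opr A f ys) \<in> \<alpha>" using ca len unfolding congruence_def by blast
    define P where "P = map (\<lambda>x. (x, x)) xs"
    define Q where "Q = zip xs ys"
    have "list_all2 (\<lambda>x y. (x, y) \<in> Delta ar A \<alpha> \<beta>) P Q"
      using r ly unfolding P_def Q_def Rho_def by (auto simp: list_all2_conv_all_nth)
    moreover have "length P = ar f" using len unfolding P_def by simp
    ultimately have "(opr (cong_alg A \<alpha>) f P, opr (cong_alg A \<alpha>) f Q) \<in> Delta ar A \<alpha> \<beta>"
      using Delta_cong[OF alg ca cb] unfolding congruence_def by blast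
    moreover have "map fst P = xs" "map snd P = xs" "map fst Q = xs" "map snd Q = ys"
      using ly unfolding P_def Q_def by (auto simp: comp_def)
    ultimately show ?thesis unfolding Rho_def using fa by simp
  qed
qed

lemma Rho_cent_ba: "centralizes ar A \<beta> \<alpha> Rho"
  unfolding centralizes_def
proof (intro allI impI, elim conjE)
  fix t :: "('f, nat + nat) trm" and a b c e :: "nat \<Rightarrow> 'a"
  assume wt: "wf_trm ar t" and ab: "\<forall>i. (a i, b i) \<in> \<beta>" and ce: "\<forall>j. (c j, e j) \<in> \<alpha>"
    and h: "(eval A (case_sum a c) t, eval A (case_sum a e) t) \<in> Rho"
  define P where "P = eval A (case_sum a c) t"
  define P' where "P' = eval A (case_sum a e) t"
  define Q where "Q = eval A (case_sum b c) t"
  define Q' where "Q' = eval A (case_sum b e) t"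
  have D1: "((P, P), (P, P')) \<in> Delta ar A \<alpha> \<beta>" using h unfolding Rho_def P_def P'_def by auto
  have cc: "c j \<in> car A" for j using ce cong_carD[OF ca] by blast
  have bc: "b i \<in> car A" for i using ab cong_carD[OF cb] by blast
  have "((eval A (fst \<circ> case_sum (\<lambda>i. (a i, a i)) (\<lambda>j. (c j, e j))) t, eval A (snd \<circ> case_sum (\<lambda>i. (a i, a i)) (\<lambda>j. (c j, e j))) t),
         (eval A (fst \<circ> case_sum (\<lambda>i. (b i, b i)) (\<lambda>j. (c j, e j))) t, eval A (snd \<circ> case_sum (\<lambda>i. (b i, b i)) (\<lambda>j. (c j, e j))) t))
        \<in> Delta ar A \<alpha> \<beta>"
  proof (rule Delta_term[OF alg ca cb wt])
    fix v :: "nat + nat" show "(case_sum (\<lambda>i. (a i, a i)) (\<lambda>j. (c j, e j)) v, case_sum (\<lambda>i. (b i, b i)) (\<lambda>j. (c j, e j)) v) \<in> Delta ar A \<alpha> \<beta>"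
      using Delta_gen[OF alg ca cb] ab Delta_refl[OF alg ca cb] ce by (cases v) auto
  qed
  moreover have "fst \<circ> case_sum (\<lambda>i. (a i, a i)) (\<lambda>j. (c j, e j)) = case_sum a c"
    "snd \<circ> case_sum (\<lambda>i. (a i, a i)) (\<lambda>j. (c j, e j)) = case_sum a e"
    "fst \<circ> case_sum (\<lambda>i. (b i, b i)) (\<lambda>j. (c j, e j)) = case_sum b c"
    "snd \<circ> case_sum (\<lambda>i. (b i, b i)) (\<lambda>j. (c j, e j)) = case_sum b e"
    by (rule ext, simp split: sum.split)+
  ultimately have D2: "((P, P'), (Q, Q')) \<in> Delta ar A \<alpha> \<beta>" unfolding P_def P'_def Q_def Q'_def by simp
  have "(P, Q) \<in> \<beta>" unfolding P_def Q_def
    by (rule cong_eval[OF cb wt]) (use ab cong_refl[OF cb cc] in \<open>auto split: sum.split\<close>)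
  then have D3: "((Q, Q), (P, P)) \<in> Delta ar A \<alpha> \<beta>" using Delta_gen[OF alg ca cb] cong_sym[OF cb] by blast
  have QQ': "(Q, Q') \<in> \<alpha>" unfolding Q_def Q'_def
    by (rule cong_eval[OF ca wt]) (use ce cong_refl[OF ca bc] in \<open>auto split: sum.split\<close>)
  have "((Q, Q), (Q, Q')) \<in> Delta ar A \<alpha> \<beta>"
    using Delta_trans[OF alg ca cb D3 Delta_trans[OF alg ca cb D1 D2]] .
  then show "(eval A (case_sum b c) t, eval A (case_sum b e) t) \<in> Rho"
    unfolding Rho_def using QQ' unfolding Q_def Q'_def by auto
qed

lemma Rho_cent_ab: "centralizes ar A \<alpha> \<beta> Rho"
  unfolding centralizes_def
proof (intro allI impI, elim conjE)
  fix t :: "('f, nat + nat) trm" and a b c e :: "nat \<Rightarrow> 'a"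
  assume wt: "wf_trm ar t" and ab: "\<forall>i. (a i, b i) \<in> \<alpha>" and ce: "\<forall>j. (c j, e j) \<in> \<beta>"
    and h: "(eval A (case_sum a c) t, eval A (case_sum a e) t) \<in> Rho"
  define P where "P = eval A (case_sum a c) t"
  define P' where "P' = eval A (case_sum a e) t"
  define Q where "Q = eval A (case_sum b c) t"
  define Q' where "Q' = eval A (case_sum b e) t"
  have D1: "((P, P), (P, P')) \<in> Delta ar A \<alpha> \<beta>" and PP': "(P, P') \<in> \<alpha>"
    using h unfolding Rho_def P_def P'_def by auto
  have cc: "c j \<in> car A" for j using ce cong_carD[OF cb] by blast
  have ec: "e j \<in> car A" for j using ce cong_carD[OF cb] by blast
  have ac: "a i \<in> car A" for i using ab cong_carD[OF ca] by blast
  have "((eval A (fst \<circ> case_sum (\<lambda>i. (a i, b i)) (\<lambda>j. (c j, c j))) t, eval A (snd \<circ> case_sum (\<lambda>i. (a i, b i)) (\<lambda>j. (c j, c j))) t),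
         (eval A (fst \<circ> case_sum (\<lambda>i. (a i, b i)) (\<lambda>j. (e j, e j))) t, eval A (snd \<circ> case_sum (\<lambda>i. (a i, b i)) (\<lambda>j. (e j, e j))) t))
        \<in> Delta ar A \<alpha> \<beta>"
  proof (rule Delta_term[OF alg ca cb wt])
    fix v :: "nat + nat" show "(case_sum (\<lambda>i. (a i, b i)) (\<lambda>j. (c j, c j)) v, case_sum (\<lambda>i. (a i, b i)) (\<lambda>j. (e j, e j)) v) \<in> Delta ar A \<alpha> \<beta>"
      using Delta_gen[OF alg ca cb] ab Delta_refl[OF alg ca cb] ce by (cases v) auto
  qed
  moreover have "fst \<circ> case_sum (\<lambda>i. (a i, b i)) (\<lambda>j. (c j, c j)) = case_sum a c"
    "snd \<circ> case_sum (\<lambda>i. (a i, b i)) (\<lambda>j. (c j, c j)) = case_sum b c"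
    "fst \<circ> case_sum (\<lambda>i. (a i, b i)) (\<lambda>j. (e j, e j)) = case_sum a e"
    "snd \<circ> case_sum (\<lambda>i. (a i, b i)) (\<lambda>j. (e j, e j)) = case_sum b e"
    by (rule ext, simp split: sum.split)+
  ultimately have D2: "((P, Q), (P', Q')) \<in> Delta ar A \<alpha> \<beta>" unfolding P_def P'_def Q_def Q'_def by simp
  have "(P, P') \<in> \<beta>" unfolding P_def P'_def
    by (rule cong_eval[OF cb wt]) (use ce cong_refl[OF cb ac] in \<open>auto split: sum.split\<close>)
  then have D3: "((P, P), (P', P')) \<in> Delta ar A \<alpha> \<beta>" using Delta_gen[OF alg ca cb] by blast
  have PQ: "(P, Q) \<in> \<alpha>" and P'Q': "(P', Q') \<in> \<alpha>" using Delta_D[OF alg ca cb D2] by auto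
  have PP: "(P, P) \<in> \<alpha>" using a_trans[OF PQ a_sym[OF PQ]] .
  have "((apply3 A m (fst (P, Q)) (fst (P, P)) (fst (P, P)), apply3 A m (snd (P, Q)) (snd (P, P)) (snd (P, P))),
         (apply3 A m (fst (P', Q')) (fst (P', P')) (fst (P, P')), apply3 A m (snd (P', Q')) (snd (P', P')) (snd (P, P'))))
        \<in> Delta ar A \<alpha> \<beta>"
    by (rule Delta_apply3[OF alg ca cb wfm D2 D3 D1])
  then have D4: "((P, Q), (P, Q')) \<in> Delta ar A \<alpha> \<beta>"
    using mxx[OF PP] myxx[OF PQ] mxx[OF a_sym[OF PP']] myxx[OF P'Q'] by simp
  have "((Q, Q), (Q, Q')) \<in> Delta ar A \<alpha> \<beta>" by (rule shift[OF D4 a_sym[OF PQ]])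
  moreover have "(Q, Q') \<in> \<alpha>" using a_trans[OF a_sym[OF PQ] a_trans[OF PP' P'Q']] .
  ultimately show "(eval A (case_sum b c) t, eval A (case_sum b e) t) \<in> Rho"
    unfolding Rho_def Q_def Q'_def by auto
qed

lemma comm_ba_Delta: "(y, z) \<in> comm ar A \<beta> \<alpha> \<Longrightarrow> (y, z) \<in> \<alpha> \<and> ((y, y), (y, z)) \<in> Delta ar A \<alpha> \<beta>"
  using comm_least[OF Rho_cong Rho_cent_ba] unfolding Rho_def by blast

lemma comm_ab_Delta: "(y, z) \<in> comm ar A \<alpha> \<beta> \<Longrightarrow> (y, z) \<in> \<alpha> \<and> ((y, y), (y, z)) \<in> Delta ar A \<alpha> \<beta>"
  using comm_least[OF Rho_cong Rho_cent_ab] unfolding Rho_def by blast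

end

context
  fixes ar :: "'f \<Rightarrow> nat" and A :: "('a, 'f) alg" and \<alpha> :: "('a \<times> 'a) set"
  assumes alg: "algebra ar A" and ca: "congruence ar A \<alpha>"
begin

lemma cong_compat: "congruence ar' B \<theta> \<Longrightarrow> length xs = ar' f \<Longrightarrow> list_all2 (\<lambda>x y. (x, y) \<in> \<theta>) xs ys \<Longrightarrow>
  (opr B f xs, opr B f ys) \<in> \<theta>"
  unfolding congruence_def by blast

definition EC where "EC = {(p, q). p \<in> \<alpha> \<and> q \<in> \<alpha> \<and> (fst p = snd p \<longleftrightarrow> fst q = snd q)}"

lemma EC_equiv: "equiv (car (cong_alg A \<alpha>)) EC"
  unfolding equiv_def refl_on_def sym_def trans_def EC_def by auto

definition Gam where "Gam = {(x, y). x \<in> car A \<and> y \<in> car A \<and> ((x, x), (y, y)) \<in> polyK ar (cong_alg A \<alpha>) EC}"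

lemma K_cong: "congruence ar (cong_alg A \<alpha>) (polyK ar (cong_alg A \<alpha>) EC)"
  by (rule polyK_cong[OF algC[OF alg ca ca] EC_equiv])

lemma Gam_cong: "congruence ar A Gam"
proof (rule congruenceI)
  show "Gam \<subseteq> car A \<times> car A" unfolding Gam_def by auto
  show "(x, x) \<in> Gam" if "x \<in> car A" for x
  proof -
    have "(x, x) \<in> car (cong_alg A \<alpha>)" using cong_refl[OF ca that] by simp
    then show ?thesis unfolding Gam_def using that cong_refl[OF K_cong] by simp
  qed
  show "(y, x) \<in> Gam" if "(x, y) \<in> Gam" for x y
  proof -
    have "((x, x), (y, y)) \<in> polyK ar (cong_alg A \<alpha>) EC" "x \<in> car A" "y \<in> car A"
      using that unfolding Gam_def by auto
    then show ?thesis unfolding Gam_def using cong_sym[OF K_cong] by simp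
  qed
  show "(x, z) \<in> Gam" if "(x, y) \<in> Gam" "(y, z) \<in> Gam" for x y z
  proof -
    have "((x, x), (y, y)) \<in> polyK ar (cong_alg A \<alpha>) EC" "x \<in> car A"
      "((y, y), (z, z)) \<in> polyK ar (cong_alg A \<alpha>) EC" "z \<in> car A"
      using that unfolding Gam_def by auto
    then show ?thesis unfolding Gam_def using cong_trans[OF K_cong] by simp
  qed
  show "(opr A f xs, opr A f ys) \<in> Gam"
    if len: "length xs = ar f" and r: "list_all2 (\<lambda>x y. (x, y) \<in> Gam) xs ys" for f xs ys
  proof -
    have ly: "length ys = length xs" using r by (simp add: list_all2_lengthD)
    have "set xs \<subseteq> car A" "set ys \<subseteq> car A"
      using r unfolding Gam_def by (auto simp: list_all2_conv_all_nth set_conv_nth)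
    then have c: "opr A f xs \<in> car A" "opr A f ys \<in> car A" using alg len ly unfolding algebra_def by auto
    have LL: "list_all2 (\<lambda>x y. (x, y) \<in> polyK ar (cong_alg A \<alpha>) EC) (map (\<lambda>x. (x, x)) xs) (map (\<lambda>x. (x, x)) ys)"
      using r unfolding Gam_def by (auto simp: list_all2_conv_all_nth)
    have "(opr (cong_alg A \<alpha>) f (map (\<lambda>x. (x, x)) xs), opr (cong_alg A \<alpha>) f (map (\<lambda>x. (x, x)) ys))
        \<in> polyK ar (cong_alg A \<alpha>) EC"
      by (rule cong_compat[OF K_cong _ LL]) (use len in simp)
    then show ?thesis unfolding Gam_def using c by (simp add: comp_def)
  qed
qed

lemma Gam_greatest:
  assumes cg: "congruence ar A \<gamma>" and cent: "centralizes ar A \<gamma> \<alpha> (Id_on (car A))"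
  shows "\<gamma> \<subseteq> Gam"
proof
  fix p assume p: "p \<in> \<gamma>"
  obtain x y where pxy: "p = (x, y)" by (cases p)
  have xy: "(x, y) \<in> \<gamma>" using p pxy by simp
  have yx: "(y, x) \<in> \<gamma>" using cong_sym[OF cg xy] .
  have xc: "x \<in> car A" and yc: "y \<in> car A" using cong_carD[OF cg xy] by auto
  have "((x, x), (y, y)) \<in> polyK ar (cong_alg A \<alpha>) EC"
    unfolding polyK_def
  proof (safe)
    show "(x, x) \<in> car (cong_alg A \<alpha>)" "(y, y) \<in> car (cong_alg A \<alpha>)"
      using cong_refl[OF ca] xc yc by auto
    fix s :: "('f, nat) trm" and i and \<rho> :: "nat \<Rightarrow> 'a \<times> 'a"
    assume ws: "wf_trm ar s" and \<rho>: "\<forall>v. \<rho> v \<in> car (cong_alg A \<alpha>)"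
    have \<rho>': "\<forall>k. \<rho> k \<in> \<alpha>" using \<rho> by simp
    have in1: "eval (cong_alg A \<alpha>) (\<rho>(i := (x, x))) s \<in> \<alpha>" "eval (cong_alg A \<alpha>) (\<rho>(i := (y, y))) s \<in> \<alpha>"
      using eval_car[OF algC[OF alg ca ca] ws] \<rho> xc yc cong_refl[OF ca] by auto
    have ec: "eval A ((snd \<circ> \<rho>)(i := z)) s \<in> car A" if "z \<in> car A" for z
      using that \<rho>' cong_carD[OF ca] by (intro eval_car[OF alg ws]) (auto, metis prod.collapse)
    have m1: "(eval A ((fst \<circ> \<rho>)(i := y)) s, eval A ((snd \<circ> \<rho>)(i := y)) s) \<in> Id_on (car A)"
      if "(eval A ((fst \<circ> \<rho>)(i := x)) s, eval A ((snd \<circ> \<rho>)(i := x)) s) \<in> Id_on (car A)"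
      by (rule matrix2[OF alg ca cg cent ws \<rho>' xy that])
    have m2: "(eval A ((fst \<circ> \<rho>)(i := x)) s, eval A ((snd \<circ> \<rho>)(i := x)) s) \<in> Id_on (car A)"
      if "(eval A ((fst \<circ> \<rho>)(i := y)) s, eval A ((snd \<circ> \<rho>)(i := y)) s) \<in> Id_on (car A)"
      by (rule matrix2[OF alg ca cg cent ws \<rho>' yx that])
    show "(eval (cong_alg A \<alpha>) (\<rho>(i := (x, x))) s, eval (cong_alg A \<alpha>) (\<rho>(i := (y, y))) s) \<in> EC"
    proof -
      have "eval A ((fst \<circ> \<rho>)(i := x)) s = eval A ((snd \<circ> \<rho>)(i := x)) s \<longleftrightarrow>
            eval A ((fst \<circ> \<rho>)(i := y)) s = eval A ((snd \<circ> \<rho>)(i := y)) s"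
        using m1 m2 ec[OF xc] ec[OF yc] unfolding Id_on_iff by metis
      then show ?thesis unfolding EC_def using in1 unfolding eval_C_upd[OF alg ca ca] by auto
    qed
  qed
  then show "p \<in> Gam" unfolding Gam_def pxy using xc yc by auto
qed

lemma Gam_cent: "centralizes ar A Gam \<alpha> (Id_on (car A))"
  unfolding centralizes_def
proof (intro allI impI, elim conjE)
  fix t :: "('f, nat + nat) trm" and a b c e :: "nat \<Rightarrow> 'a"
  assume wt: "wf_trm ar t" and ab: "\<forall>i. (a i, b i) \<in> Gam" and ce: "\<forall>j. (c j, e j) \<in> \<alpha>"
    and h: "(eval A (case_sum a c) t, eval A (case_sum a e) t) \<in> Id_on (car A)"
  define F where "F = Inl -` vars_trm t"
  have fF: "finite F" unfolding F_def by (rule finite_vimageI[OF finite_vars]) simp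
  define aG where "aG = (\<lambda>G k. if k \<in> G then b k else a k)"
  have ac: "a k \<in> car A" "b k \<in> car A" for k using ab unfolding Gam_def by auto
  have cc: "c j \<in> car A" "e j \<in> car A" for j using ce cong_carD[OF ca] by blast+
  have aGc: "aG G k \<in> car A" for G k unfolding aG_def using ac by auto
  define g :: "nat + nat \<Rightarrow> nat" where "g = (\<lambda>v. case v of Inl k \<Rightarrow> 2 * k | Inr j \<Rightarrow> 2 * j + 1)"
  define s where "s = subst (\<lambda>v. Var (g v)) t"
  have ws: "wf_trm ar s" unfolding s_def by (rule wf_subst_var[OF wt])
  have odd_ne: "\<And>a b::nat. Suc (2 * a) \<noteq> 2 * b" by presburger
  have step: "eval A (case_sum (aG G) c) t = eval A (case_sum (aG G) e) t" if "G \<subseteq> F" for G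
  proof -
    have "finite G" using that fF finite_subset by blast
    then show ?thesis using that
    proof (induction G rule: finite_induct)
      case empty
      have e: "aG {} = a" by (rule ext) (simp add: aG_def)
      show ?case using h unfolding e Id_on_iff by simp
    next
      case (insert k G)
      define \<rho> where "\<rho> = (\<lambda>n::nat. if even n then (aG G (n div 2), aG G (n div 2)) else (c (n div 2), e (n div 2)))"
      have \<rho>a: "\<forall>n. \<rho> n \<in> car (cong_alg A \<alpha>)" unfolding \<rho>_def using aGc cong_refl[OF ca] ce by auto
      have kk: "((a k, a k), (b k, b k)) \<in> polyK ar (cong_alg A \<alpha>) EC" using ab unfolding Gam_def by auto
      have K: "(eval (cong_alg A \<alpha>) (\<rho>(2 * k := (a k, a k))) s, eval (cong_alg A \<alpha>) (\<rho>(2 * k := (b k, b k))) s) \<in> EC"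
        by (rule polyKD[OF kk ws]) (use \<rho>a in auto)
      have ev: "eval (cong_alg A \<alpha>) (\<rho>(2 * k := (z, z))) s =
          (eval A (case_sum ((aG G)(k := z)) c) t, eval A (case_sum ((aG G)(k := z)) e) t)" for z
      proof -
        have "fst \<circ> \<rho>(2 * k := (z, z)) \<circ> g = case_sum ((aG G)(k := z)) c"
          "snd \<circ> \<rho>(2 * k := (z, z)) \<circ> g = case_sum ((aG G)(k := z)) e"
          using odd_ne by (rule_tac ext, simp add: g_def \<rho>_def split: sum.split)+
        then show ?thesis unfolding eval_cong_alg s_def eval_subst_var by (simp add: comp_assoc)
      qed
      have e1: "(aG G)(k := a k) = aG G" using insert(2) unfolding aG_def by auto
      have e2: "(aG G)(k := b k) = aG (insert k G)" unfolding aG_def by auto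
      show ?case using K insert(3,4) unfolding ev e1 e2 EC_def by auto
    qed
  qed
  have "eval A (case_sum (aG F) c) t = eval A (case_sum (aG F) e) t" using step by blast
  moreover have "eval A (case_sum (aG F) c) t = eval A (case_sum b c) t"
    by (rule eval_vars) (auto simp: aG_def F_def split: sum.split)
  moreover have "eval A (case_sum (aG F) e) t = eval A (case_sum b e) t"
    by (rule eval_vars) (auto simp: aG_def F_def split: sum.split)
  moreover have "eval A (case_sum b c) t \<in> car A"
    by (rule eval_car[OF alg wt]) (use ac cc in \<open>auto split: sum.split\<close>)
  ultimately show "(eval A (case_sum b c) t, eval A (case_sum b e) t) \<in> Id_on (car A)" by (simp add: Id_on_iff)
qed

lemma centralizer_eq: "centralizer ar A \<alpha> = Gam"
  unfolding centralizer_def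
proof (rule Greatest_equality)
  show "congruence ar A Gam \<and> comm ar A Gam \<alpha> = Id_on (car A)"
    using Gam_cong comm_Id_iff[OF alg Gam_cong ca] Gam_cent by blast
  fix \<gamma> assume "congruence ar A \<gamma> \<and> comm ar A \<gamma> \<alpha> = Id_on (car A)"
  then show "\<gamma> \<le> Gam" using comm_Id_iff[OF alg _ ca] Gam_greatest by blast
qed

lemma below_centralizer:
  assumes "congruence ar A \<gamma>" "\<gamma> \<subseteq> centralizer ar A \<alpha>"
  shows "centralizes ar A \<gamma> \<alpha> (Id_on (car A))"
  using centralizes_mono[OF Gam_cent] assms(2) unfolding centralizer_eq by blast

end

lemma diff_props:
  fixes A :: "('a, 'f) alg"
  assumes "is_diff_term TYPE('a) ar \<Sigma> d" "models ar \<Sigma> A"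
  shows "wf_trm ar d" "\<And>\<theta> a b. congruence ar A \<theta> \<Longrightarrow> (a, b) \<in> \<theta> \<Longrightarrow>
     apply3 A d a a b = b \<and> (apply3 A d a b b, a) \<in> comm ar A \<theta> \<theta>"
proof -
  show "wf_trm ar d" using assms(1) by (simp add: is_diff_term_def)
  have "diff_term_at TYPE('a) ar \<Sigma> d" using assms(1) by (simp add: is_diff_term_def)
  note h = this[unfolded diff_term_at_def, rule_format, OF assms(2)]
  fix \<theta> a b assume "congruence ar A \<theta>" "(a, b) \<in> \<theta>"
  from h[OF this] show "apply3 A d a a b = b \<and> (apply3 A d a b b, a) \<in> comm ar A \<theta> \<theta>" .
qed

lemma weak_props:
  fixes A :: "('a, 'f) alg"
  assumes "is_weak_diff_term TYPE('a) ar \<Sigma> d" "models ar \<Sigma> A"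
  shows "wf_trm ar d" "\<And>\<theta> a b. congruence ar A \<theta> \<Longrightarrow> (a, b) \<in> \<theta> \<Longrightarrow>
     (apply3 A d a a b, b) \<in> comm ar A \<theta> \<theta> \<and> (b, apply3 A d b a a) \<in> comm ar A \<theta> \<theta>"
proof -
  show "wf_trm ar d" using assms(1) by (simp add: is_weak_diff_term_def)
  have "weak_diff_term_at TYPE('a) ar \<Sigma> d" using assms(1) by (simp add: is_weak_diff_term_def)
  note h = this[unfolded weak_diff_term_at_def, rule_format, OF assms(2)]
  fix \<theta> a b assume "congruence ar A \<theta>" "(a, b) \<in> \<theta>"
  from h[OF this] show "(apply3 A d a a b, b) \<in> comm ar A \<theta> \<theta> \<and> (b, apply3 A d b a a) \<in> comm ar A \<theta> \<theta>" .
qed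

lemma exact_from_weak:
  assumes ca: "congruence ar A \<alpha>" and ab: "comm ar A \<alpha> \<alpha> = Id_on (car A)"
    and w: "\<And>a b. (a, b) \<in> \<alpha> \<Longrightarrow> (apply3 A m a a b, b) \<in> comm ar A \<alpha> \<alpha> \<and> (b, apply3 A m b a a) \<in> comm ar A \<alpha> \<alpha>"
  shows "\<And>x y. (x, y) \<in> \<alpha> \<Longrightarrow> apply3 A m x x y = y" "\<And>x y. (x, y) \<in> \<alpha> \<Longrightarrow> apply3 A m y x x = y"
  using w unfolding ab by (auto simp: Id_on_iff)

lemma diff_to_weak:
  assumes alg: "algebra ar A" and ca: "congruence ar A \<alpha>"
    and d: "\<And>\<theta> a b. congruence ar A \<theta> \<Longrightarrow> (a, b) \<in> \<theta> \<Longrightarrow> apply3 A m a a b = b \<and> (apply3 A m a b b, a) \<in> comm ar A \<theta> \<theta>"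
  shows "\<And>a b. (a, b) \<in> \<alpha> \<Longrightarrow> (apply3 A m a a b, b) \<in> comm ar A \<alpha> \<alpha> \<and> (b, apply3 A m b a a) \<in> comm ar A \<alpha> \<alpha>"
proof -
  fix a b assume ab: "(a, b) \<in> \<alpha>"
  have cc: "congruence ar A (comm ar A \<alpha> \<alpha>)" using comm_props(1)[OF alg ca ca] .
  have bc: "b \<in> car A" using cong_carD[OF ca ab] by simp
  have "apply3 A m a a b = b" using d[OF ca ab] by simp
  then have 1: "(apply3 A m a a b, b) \<in> comm ar A \<alpha> \<alpha>" using cong_refl[OF cc bc] by simp
  have "(apply3 A m b a a, b) \<in> comm ar A \<alpha> \<alpha>" using d[OF ca cong_sym[OF ca ab]] by simp
  then show "(apply3 A m a a b, b) \<in> comm ar A \<alpha> \<alpha> \<and> (b, apply3 A m b a a) \<in> comm ar A \<alpha> \<alpha>"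
    using 1 cong_sym[OF cc] by blast
qed

lemma alpha_hat_iff:
  assumes ca: "congruence ar A \<alpha>"
  shows "((x, y), (u, v)) \<in> alpha_hat \<alpha> \<longleftrightarrow> (x, y) \<in> \<alpha> \<and> (u, v) \<in> \<alpha> \<and> (x, u) \<in> \<alpha> \<and> (y, v) \<in> \<alpha>"
proof
  assume "((x, y), (u, v)) \<in> alpha_hat \<alpha>"
  then show "(x, y) \<in> \<alpha> \<and> (u, v) \<in> \<alpha> \<and> (x, u) \<in> \<alpha> \<and> (y, v) \<in> \<alpha>" unfolding alpha_hat_def by auto
next
  assume h: "(x, y) \<in> \<alpha> \<and> (u, v) \<in> \<alpha> \<and> (x, u) \<in> \<alpha> \<and> (y, v) \<in> \<alpha>"
  have s: "\<And>p q. (p, q) \<in> \<alpha> \<Longrightarrow> (q, p) \<in> \<alpha>" using cong_sym[OF ca] .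
  have t: "\<And>p q r. (p, q) \<in> \<alpha> \<Longrightarrow> (q, r) \<in> \<alpha> \<Longrightarrow> (p, r) \<in> \<alpha>" using cong_trans[OF ca] .
  have xx: "(x, x) \<in> \<alpha>" using h s t by blast
  have all: "\<forall>p\<in>{x, y, u, v}. (x, p) \<in> \<alpha>" using h xx t by blast
  have "\<forall>p\<in>{x, y, u, v}. \<forall>q\<in>{x, y, u, v}. (p, q) \<in> \<alpha>"
  proof (intro ballI)
    fix p q assume "p \<in> {x, y, u, v}" "q \<in> {x, y, u, v}"
    then have "(x, p) \<in> \<alpha>" "(x, q) \<in> \<alpha>" using all by auto
    then show "(p, q) \<in> \<alpha>" using s t by blast
  qed
  then show "((x, y), (u, v)) \<in> alpha_hat \<alpha>" unfolding alpha_hat_def using h by auto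
qed

lemma part1:
  fixes A :: "('a, 'f) alg"
  assumes alg: "algebra ar A" and ca: "congruence ar A \<alpha>" and cb: "congruence ar A \<beta>"
    and wfd: "wf_trm ar d"
    and dd: "\<And>\<theta> a b. congruence ar A \<theta> \<Longrightarrow> (a, b) \<in> \<theta> \<Longrightarrow> apply3 A d a a b = b \<and> (apply3 A d a b b, a) \<in> comm ar A \<theta> \<theta>"
    and D: "((a, b), (a, e)) \<in> Delta ar A \<alpha> \<beta>"
  shows "(b, e) \<in> comm ar A \<alpha> \<beta>"
proof -
  have dxx: "apply3 A d x x w = w" if "x \<in> car A" "w \<in> car A" for x w
    using dd[OF total_cong[OF alg]] that by blast
  have ddiff: "(apply3 A d x y y, x) \<in> comm ar A \<theta> \<theta>" if "congruence ar A \<theta>" "(x, y) \<in> \<theta>" for \<theta> x y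
    using dd[OF that] by blast
  have csub: "comm ar A (\<alpha> \<inter> \<beta>) (\<alpha> \<inter> \<beta>) \<subseteq> comm ar A \<alpha> \<beta>" by (rule comm_mono) auto
  show ?thesis
    by (rule core1[OF alg ca cb wfd dxx ddiff comm_props(2)[OF alg ca cb] comm_props(1)[OF alg ca cb] csub D])
qed

lemma part2:
  fixes A :: "('a, 'f) alg"
  assumes alg: "algebra ar A" and ca: "congruence ar A \<alpha>" and cb: "congruence ar A \<beta>"
    and wfm: "wf_trm ar m"
    and mxx: "\<And>x y. (x, y) \<in> \<alpha> \<Longrightarrow> apply3 A m x x y = y"
    and myxx: "\<And>x y. (x, y) \<in> \<alpha> \<Longrightarrow> apply3 A m y x x = y"
    and bc: "b \<in> car A"
  shows "(\<exists>a\<in>car A. (a, b) \<in> \<alpha> \<and> (a, d) \<in> \<alpha> \<and> ((a, b), (a, d)) \<in> Delta ar A \<alpha> \<beta>)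
          \<longleftrightarrow> (b, d) \<in> comm ar A \<beta> \<alpha>"
proof
  assume "\<exists>a\<in>car A. (a, b) \<in> \<alpha> \<and> (a, d) \<in> \<alpha> \<and> ((a, b), (a, d)) \<in> Delta ar A \<alpha> \<beta>"
  then obtain a where D: "((a, b), (a, d)) \<in> Delta ar A \<alpha> \<beta>" by blast
  show "(b, d) \<in> comm ar A \<beta> \<alpha>"
    by (rule core2[OF alg ca cb wfm mxx myxx comm_props(2)[OF alg cb ca] comm_props(1)[OF alg cb ca] D])
next
  assume "(b, d) \<in> comm ar A \<beta> \<alpha>"
  from comm_ba_Delta[OF alg ca cb wfm mxx myxx this]
  have "(b, d) \<in> \<alpha>" "((b, b), (b, d)) \<in> Delta ar A \<alpha> \<beta>" by auto
  then show "\<exists>a\<in>car A. (a, b) \<in> \<alpha> \<and> (a, d) \<in> \<alpha> \<and> ((a, b), (a, d)) \<in> Delta ar A \<alpha> \<beta>"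
    using bc cong_refl[OF ca bc] by blast
qed

lemma part3:
  fixes A :: "('a, 'f) alg"
  assumes alg: "algebra ar A" and ca: "congruence ar A \<alpha>"
    and wfm: "wf_trm ar m"
    and mxx: "\<And>x y. (x, y) \<in> \<alpha> \<Longrightarrow> apply3 A m x x y = y"
    and myxx: "\<And>x y. (x, y) \<in> \<alpha> \<Longrightarrow> apply3 A m y x x = y"
    and cg: "congruence ar A \<gamma>" and ag: "\<alpha> \<subseteq> \<gamma>" and gc: "\<gamma> \<subseteq> centralizer ar A \<alpha>"
  shows "Delta ar A \<alpha> \<alpha> = Delta ar A \<alpha> \<gamma> \<inter> alpha_hat \<alpha>"
proof -
  have cent: "centralizes ar A \<gamma> \<alpha> (Id_on (car A))" by (rule below_centralizer[OF alg ca cg gc])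
  have sub1: "Delta ar A \<alpha> \<alpha> \<subseteq> Delta ar A \<alpha> \<gamma>"
  proof (rule Delta_least[OF alg ca ca Delta_cong[OF alg ca cg]])
    show "gens \<alpha> \<subseteq> Delta ar A \<alpha> \<gamma>" unfolding gens_def using ag Delta_gen[OF alg ca cg] by blast
  qed
  have sub2: "Delta ar A \<alpha> \<alpha> \<subseteq> alpha_hat \<alpha>"
  proof
    fix p assume p: "p \<in> Delta ar A \<alpha> \<alpha>"
    obtain x y u v where pe: "p = ((x, y), (u, v))" by (metis prod.collapse)
    show "p \<in> alpha_hat \<alpha>" using Delta_D[OF alg ca ca p[unfolded pe]] unfolding pe alpha_hat_iff[OF ca] by blast
  qed
  have sup: "Delta ar A \<alpha> \<gamma> \<inter> alpha_hat \<alpha> \<subseteq> Delta ar A \<alpha> \<alpha>"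
  proof
    fix p assume p: "p \<in> Delta ar A \<alpha> \<gamma> \<inter> alpha_hat \<alpha>"
    obtain x y u v where pe: "p = ((x, y), (u, v))" by (metis prod.collapse)
    have Dg: "((x, y), (u, v)) \<in> Delta ar A \<alpha> \<gamma>" using p pe by simp
    have xy: "(x, y) \<in> \<alpha>" and uv: "(u, v) \<in> \<alpha>" and xu: "(x, u) \<in> \<alpha>"
      using p pe alpha_hat_iff[OF ca] by auto
    have xx: "(x, x) \<in> \<alpha>" using cong_refl[OF ca] cong_carD[OF ca xy] by blast
    define z where "z = apply3 A m y x u"
    have "((apply3 A m (fst (x, y)) (fst (x, x)) (fst (x, x)), apply3 A m (snd (x, y)) (snd (x, x)) (snd (x, x))),
           (apply3 A m (fst (x, y)) (fst (x, x)) (fst (u, u)), apply3 A m (snd (x, y)) (snd (x, x)) (snd (u, u))))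
          \<in> Delta ar A \<alpha> \<alpha>"
      by (rule Delta_apply3[OF alg ca ca wfm Delta_refl[OF alg ca ca xy] Delta_refl[OF alg ca ca xx] Delta_gen[OF alg ca ca xu]])
    then have D1: "((x, y), (u, z)) \<in> Delta ar A \<alpha> \<alpha>" unfolding z_def using mxx[OF xx] myxx[OF xy] mxx[OF xu] by simp
    have "((u, z), (u, v)) \<in> Delta ar A \<alpha> \<gamma>"
      using Delta_trans[OF alg ca cg Delta_sym[OF alg ca cg] Dg] D1 sub1 by blast
    from core2[OF alg ca cg wfm mxx myxx cent Id_cong[OF alg] this]
    have "z = v" by (simp add: Id_on_iff)
    then show "p \<in> Delta ar A \<alpha> \<alpha>" using D1 pe by simp
  qed
  show ?thesis using sub1 sub2 sup by blast
qed

lemma part4: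
  fixes A :: "('a, 'f) alg"
  assumes alg: "algebra ar A" and ca: "congruence ar A \<alpha>" and cb: "congruence ar A \<beta>"
    and wfm: "wf_trm ar m"
    and dd: "\<And>\<theta> a b. congruence ar A \<theta> \<Longrightarrow> (a, b) \<in> \<theta> \<Longrightarrow> apply3 A m a a b = b \<and> (apply3 A m a b b, a) \<in> comm ar A \<theta> \<theta>"
    and abel: "comm ar A \<alpha> \<alpha> = Id_on (car A)"
    and ab: "(a, b) \<in> \<alpha>" and cd: "(c, d) \<in> \<alpha>"
  shows "(let P1 = ((a, b), (c, d)) \<in> Delta ar A \<alpha> \<beta>;
               P2 = (((a, b), (c, apply3 A m b a c)) \<in> Delta ar A \<alpha> \<beta> \<and>
                     (d, apply3 A m b a c) \<in> comm ar A \<alpha> \<beta>);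
               P3 = ((c, a) \<in> \<beta> \<and> (a, b) \<in> \<alpha> \<and> (d, apply3 A m b a c) \<in> comm ar A \<alpha> \<beta>)
           in (P1 \<longleftrightarrow> P2) \<and> (P2 \<longleftrightarrow> P3))"
proof -
  note ex = exact_from_weak[OF ca abel diff_to_weak[OF alg ca dd]]
  have mxx: "\<And>x y. (x, y) \<in> \<alpha> \<Longrightarrow> apply3 A m x x y = y" using ex(1) .
  have myxx: "\<And>x y. (x, y) \<in> \<alpha> \<Longrightarrow> apply3 A m y x x = y" using ex(2) .
  have dxx: "apply3 A m x x w = w" if "x \<in> car A" "w \<in> car A" for x w
    using dd[OF total_cong[OF alg]] that by blast
  have cc: "congruence ar A (comm ar A \<alpha> \<beta>)" by (rule comm_props(1)[OF alg ca cb])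
  define w where "w = apply3 A m b a c"
  have ac: "a \<in> car A" using cong_carD[OF ca ab] by simp
  have aa: "(a, a) \<in> \<alpha>" using cong_refl[OF ca ac] .
  have X: "((a, b), (c, w)) \<in> Delta ar A \<alpha> \<beta>" if acb: "(a, c) \<in> \<beta>"
  proof -
    have cc': "c \<in> car A" using cong_carD[OF cb acb] by simp
    have "((apply3 A m (fst (a, b)) (fst (a, a)) (fst (a, a)), apply3 A m (snd (a, b)) (snd (a, a)) (snd (a, a))),
           (apply3 A m (fst (a, b)) (fst (a, a)) (fst (c, c)), apply3 A m (snd (a, b)) (snd (a, a)) (snd (c, c))))
          \<in> Delta ar A \<alpha> \<beta>"
      by (rule Delta_apply3[OF alg ca cb wfm Delta_refl[OF alg ca cb ab] Delta_refl[OF alg ca cb aa] Delta_gen[OF alg ca cb acb]])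
    then show ?thesis unfolding w_def using mxx[OF aa] myxx[OF ab] dxx[OF ac cc'] by simp
  qed
  have 12: "((a, b), (c, w)) \<in> Delta ar A \<alpha> \<beta> \<and> (d, w) \<in> comm ar A \<alpha> \<beta>"
    if P1: "((a, b), (c, d)) \<in> Delta ar A \<alpha> \<beta>"
  proof -
    have acb: "(a, c) \<in> \<beta>" using Delta_D[OF alg ca cb P1] by simp
    have D: "((c, w), (c, d)) \<in> Delta ar A \<alpha> \<beta>"
      using Delta_trans[OF alg ca cb Delta_sym[OF alg ca cb X[OF acb]] P1] .
    have "(w, d) \<in> comm ar A \<alpha> \<beta>" by (rule part1[OF alg ca cb wfm dd D])
    then show ?thesis using X[OF acb] cong_sym[OF cc] by blast
  qed
  have 21: "((a, b), (c, d)) \<in> Delta ar A \<alpha> \<beta>"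
    if P2: "((a, b), (c, w)) \<in> Delta ar A \<alpha> \<beta> \<and> (d, w) \<in> comm ar A \<alpha> \<beta>"
  proof -
    have wd: "(w, d) \<in> comm ar A \<alpha> \<beta>" using P2 cong_sym[OF cc] by blast
    have cw: "(c, w) \<in> \<alpha>" using Delta_D[OF alg ca cb] P2 by blast
    have "((w, w), (w, d)) \<in> Delta ar A \<alpha> \<beta>" using comm_ab_Delta[OF alg ca cb wfm mxx myxx wd] by blast
    from shift[OF alg ca cb wfm mxx myxx this cw] have "((c, w), (c, d)) \<in> Delta ar A \<alpha> \<beta>" .
    then show ?thesis using Delta_trans[OF alg ca cb] P2 by blast
  qed
  have 23: "(c, a) \<in> \<beta>" if P2: "((a, b), (c, w)) \<in> Delta ar A \<alpha> \<beta>"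
    using Delta_D[OF alg ca cb P2] cong_sym[OF cb] by blast
  have 32: "((a, b), (c, w)) \<in> Delta ar A \<alpha> \<beta>" if "(c, a) \<in> \<beta>"
    using X cong_sym[OF cb that] by blast
  show ?thesis unfolding Let_def w_def[symmetric] using 12 21 23 32 ab by blast
qed

theorem lemma2p1:
  fixes ar :: "'f \<Rightarrow> nat"
    and \<Sigma> :: "(('f, nat) trm \<times> ('f, nat) trm) set"
    and A :: "('a, 'f) alg"
    and \<alpha> \<beta> :: "('a \<times> 'a) set"
  assumes wfS: "wf_identities ar \<Sigma>"
    and AV: "models ar \<Sigma> A"
    and con_a: "congruence ar A \<alpha>"
    and con_b: "congruence ar A \<beta>"
  shows
    "(has_diff_term TYPE('a) ar \<Sigma> \<longrightarrow>
       (\<forall>a\<in>car A. \<forall>b\<in>car A. \<forall>d\<in>car A. (a, b) \<in> \<alpha> \<and> (a, d) \<in> \<alpha> \<longrightarrow>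
          ((a, b), (a, d)) \<in> Delta ar A \<alpha> \<beta> \<longrightarrow> (b, d) \<in> comm ar A \<alpha> \<beta>))
   \<and> (has_weak_diff_term TYPE('a) ar \<Sigma> \<and> abelian ar A \<alpha> \<longrightarrow>
       (\<forall>b\<in>car A. \<forall>d\<in>car A.
          (\<exists>a\<in>car A. (a, b) \<in> \<alpha> \<and> (a, d) \<in> \<alpha> \<and> ((a, b), (a, d)) \<in> Delta ar A \<alpha> \<beta>)
          \<longleftrightarrow> (b, d) \<in> comm ar A \<beta> \<alpha>))
   \<and> (has_weak_diff_term TYPE('a) ar \<Sigma> \<and> abelian ar A \<alpha> \<longrightarrow>
       (\<forall>\<gamma>. congruence ar A \<gamma> \<and> \<alpha> \<subseteq> \<gamma> \<and> \<gamma> \<subseteq> centralizer ar A \<alpha> \<longrightarrow>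
          Delta ar A \<alpha> \<alpha> = Delta ar A \<alpha> \<gamma> \<inter> alpha_hat \<alpha>))
   \<and> (\<forall>m. is_diff_term TYPE('a) ar \<Sigma> m \<and> abelian ar A \<alpha> \<longrightarrow>
       (\<forall>a b c d. (a, b) \<in> \<alpha> \<and> (c, d) \<in> \<alpha> \<longrightarrow>
          (let P1 = ((a, b), (c, d)) \<in> Delta ar A \<alpha> \<beta>;
               P2 = (((a, b), (c, apply3 A m b a c)) \<in> Delta ar A \<alpha> \<beta> \<and>
                     (d, apply3 A m b a c) \<in> comm ar A \<alpha> \<beta>);
               P3 = ((c, a) \<in> \<beta> \<and> (a, b) \<in> \<alpha> \<and> (d, apply3 A m b a c) \<in> comm ar A \<alpha> \<beta>)
           in (P1 \<longleftrightarrow> P2) \<and> (P2 \<longleftrightarrow> P3))))"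
proof -
  have alg: "algebra ar A" using AV unfolding models_def by simp
  have G1: "has_diff_term TYPE('a) ar \<Sigma> \<longrightarrow>
       (\<forall>a\<in>car A. \<forall>b\<in>car A. \<forall>d\<in>car A. (a, b) \<in> \<alpha> \<and> (a, d) \<in> \<alpha> \<longrightarrow>
          ((a, b), (a, d)) \<in> Delta ar A \<alpha> \<beta> \<longrightarrow> (b, d) \<in> comm ar A \<alpha> \<beta>)"
  proof (intro impI ballI)
    assume "has_diff_term TYPE('a) ar \<Sigma>"
    then obtain m where m: "is_diff_term TYPE('a) ar \<Sigma> m" unfolding has_diff_term_def by blast
    fix a b d assume "(a, b) \<in> \<alpha> \<and> (a, d) \<in> \<alpha>" "((a, b), (a, d)) \<in> Delta ar A \<alpha> \<beta>"
    then show "(b, d) \<in> comm ar A \<alpha> \<beta>"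
      using part1[OF alg con_a con_b diff_props[OF m AV]] by blast
  qed
  have W: "\<exists>m. wf_trm ar m \<and> (\<forall>x y. (x, y) \<in> \<alpha> \<longrightarrow> apply3 A m x x y = y) \<and>
                 (\<forall>x y. (x, y) \<in> \<alpha> \<longrightarrow> apply3 A m y x x = y)"
    if hw: "has_weak_diff_term TYPE('a) ar \<Sigma> \<and> abelian ar A \<alpha>"
  proof -
    obtain m where m: "is_weak_diff_term TYPE('a) ar \<Sigma> m" using hw unfolding has_weak_diff_term_def by blast
    have ab: "comm ar A \<alpha> \<alpha> = Id_on (car A)" using hw unfolding abelian_def by blast
    note wp = weak_props[OF m AV]
    have w: "\<And>a b. (a, b) \<in> \<alpha> \<Longrightarrow> (apply3 A m a a b, b) \<in> comm ar A \<alpha> \<alpha> \<and> (b, apply3 A m b a a) \<in> comm ar A \<alpha> \<alpha>"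
      using wp(2)[OF con_a] .
    note ex = exact_from_weak[OF con_a ab w]
    show ?thesis using wp(1) ex by blast
  qed
  have G2: "has_weak_diff_term TYPE('a) ar \<Sigma> \<and> abelian ar A \<alpha> \<longrightarrow>
       (\<forall>b\<in>car A. \<forall>d\<in>car A.
          (\<exists>a\<in>car A. (a, b) \<in> \<alpha> \<and> (a, d) \<in> \<alpha> \<and> ((a, b), (a, d)) \<in> Delta ar A \<alpha> \<beta>)
          \<longleftrightarrow> (b, d) \<in> comm ar A \<beta> \<alpha>)"
  proof (intro impI ballI)
    assume h: "has_weak_diff_term TYPE('a) ar \<Sigma> \<and> abelian ar A \<alpha>"
    then obtain m where wm: "wf_trm ar m" and mxx: "\<And>x y. (x, y) \<in> \<alpha> \<Longrightarrow> apply3 A m x x y = y"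
      and myxx: "\<And>x y. (x, y) \<in> \<alpha> \<Longrightarrow> apply3 A m y x x = y" using W by blast
    fix b d assume bcar: "b \<in> car A" "d \<in> car A"
    show "(\<exists>a\<in>car A. (a, b) \<in> \<alpha> \<and> (a, d) \<in> \<alpha> \<and> ((a, b), (a, d)) \<in> Delta ar A \<alpha> \<beta>)
          \<longleftrightarrow> (b, d) \<in> comm ar A \<beta> \<alpha>"
      by (rule part2[OF alg con_a con_b wm mxx myxx bcar(1)])
  qed
  have G3: "has_weak_diff_term TYPE('a) ar \<Sigma> \<and> abelian ar A \<alpha> \<longrightarrow>
       (\<forall>\<gamma>. congruence ar A \<gamma> \<and> \<alpha> \<subseteq> \<gamma> \<and> \<gamma> \<subseteq> centralizer ar A \<alpha> \<longrightarrow>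
          Delta ar A \<alpha> \<alpha> = Delta ar A \<alpha> \<gamma> \<inter> alpha_hat \<alpha>)"
  proof (intro impI allI)
    assume h: "has_weak_diff_term TYPE('a) ar \<Sigma> \<and> abelian ar A \<alpha>"
    then obtain m where wm: "wf_trm ar m" and mxx: "\<And>x y. (x, y) \<in> \<alpha> \<Longrightarrow> apply3 A m x x y = y"
      and myxx: "\<And>x y. (x, y) \<in> \<alpha> \<Longrightarrow> apply3 A m y x x = y" using W by blast
    fix \<gamma> assume g: "congruence ar A \<gamma> \<and> \<alpha> \<subseteq> \<gamma> \<and> \<gamma> \<subseteq> centralizer ar A \<alpha>"
    show "Delta ar A \<alpha> \<alpha> = Delta ar A \<alpha> \<gamma> \<inter> alpha_hat \<alpha>"
      using part3[OF alg con_a wm mxx myxx] g by blast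
  qed
  have G4: "\<forall>m. is_diff_term TYPE('a) ar \<Sigma> m \<and> abelian ar A \<alpha> \<longrightarrow>
       (\<forall>a b c d. (a, b) \<in> \<alpha> \<and> (c, d) \<in> \<alpha> \<longrightarrow>
          (let P1 = ((a, b), (c, d)) \<in> Delta ar A \<alpha> \<beta>;
               P2 = (((a, b), (c, apply3 A m b a c)) \<in> Delta ar A \<alpha> \<beta> \<and>
                     (d, apply3 A m b a c) \<in> comm ar A \<alpha> \<beta>);
               P3 = ((c, a) \<in> \<beta> \<and> (a, b) \<in> \<alpha> \<and> (d, apply3 A m b a c) \<in> comm ar A \<alpha> \<beta>)
           in (P1 \<longleftrightarrow> P2) \<and> (P2 \<longleftrightarrow> P3)))"
  proof (intro allI impI)
    fix m a b c d
    assume h: "is_diff_term TYPE('a) ar \<Sigma> m \<and> abelian ar A \<alpha>" and abcd: "(a, b) \<in> \<alpha> \<and> (c, d) \<in> \<alpha>"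
    have ab: "comm ar A \<alpha> \<alpha> = Id_on (car A)" using h unfolding abelian_def by blast
    have m: "is_diff_term TYPE('a) ar \<Sigma> m" using h by blast
    note dp = diff_props[OF m AV]
    show "let P1 = ((a, b), (c, d)) \<in> Delta ar A \<alpha> \<beta>;
               P2 = (((a, b), (c, apply3 A m b a c)) \<in> Delta ar A \<alpha> \<beta> \<and>
                     (d, apply3 A m b a c) \<in> comm ar A \<alpha> \<beta>);
               P3 = ((c, a) \<in> \<beta> \<and> (a, b) \<in> \<alpha> \<and> (d, apply3 A m b a c) \<in> comm ar A \<alpha> \<beta>)
           in (P1 \<longleftrightarrow> P2) \<and> (P2 \<longleftrightarrow> P3)"
      using abcd by (intro part4[OF alg con_a con_b dp(1) dp(2) ab]) auto
  qed
  show ?thesis using G1 G2 G3 G4 by blast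
qed

end
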